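(* Let $\alpha>0$, $\beta\geq 0$, $q\in(0,\pi/2)$, and $m\geq 0$. Then $$E_{\min}(q,m)\leq E_{\min}(q,0)<\sqrt{2}\,q.$$ If in addition $m>0$ and $m\beta<2\alpha\int_{\mathbb{R}}(1-|\mathbf{u}_q|^2)\,dx$, then $E_{\min}(q,m)<E_{\min}(q,0)$.
   Context: $\mathcal{E}(\mathbb{R})=\{u\in H^1_{\mathrm{loc}}(\mathbb{R};\mathbb{C}): u'\in L^2,\ 1-|u|^2\in L^2(\mathbb{R})\}$, $\mathcal{NE}(\mathbb{R})=\{u\in\mathcal{E}(\mathbb{R}):|u|>0\}$; each $u\in\mathcal{NE}(\mathbb{R})$ has a lifting $u=\rho e^{i\theta}$, $\rho=|u|$, $\theta\in H^1_{\mathrm{loc}}$ real, $\theta'\in L^2$. Let $G(s)=s(2-s)$, $p(u)=\frac12\int_{\mathbb{R}}G(|1-\rho|)\theta'\,dx$. Let $\mathcal{X}=\{(u,v)\in\mathcal{NE}(\mathbb{R})\times H^1(\mathbb{R}):|u|<2\}$ ($v$ real-valued), $\mathcal{X}_{q,m}=\{(u,v)\in\mathcal{X}:p(u)=q,\ \|v\|_{L^2}^2=m\}$. The energy is $E(u,v)=\int_{\mathbb{R}}\big(\tfrac12|u'|^2+\tfrac12(v')^2+\tfrac14(1-|u|^2)^2+\tfrac{\beta}{4}v^4-\tfrac{\alpha}{2}(1-|u|^2)v^2\big)dx$ and $E_{\min}(q,m)=\inf\{E(u,v):(u,v)\in\mathcal{X}_{q,m}\}$. For $q\in(0,\pi/2)$,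 $\mathbf{u}_q\in\mathcal{NE}(\mathbb{R})$ denotes the (known, unique up to translation and constant phase) scalar dark soliton: it satisfies $0<|\mathbf{u}_q|<1$, $p(\mathbf{u}_q)=q$ and $E(\mathbf{u}_q,0)=E_{\min}(q,0)$, and it solves $icu'+u''+(1-|u|^2)u=0$ for some $c=c(q)\in(0,\sqrt2)$. *)

theory Defs
  imports "HOL-Analysis.Analysis"
begin

text \<open>Functions on the real line are identified with their continuous representatives.\<close>

definition has_weak_deriv :: "(real \<Rightarrow> 'a::{banach,second_countable_topology}) \<Rightarrow> (real \<Rightarrow> 'a) \<Rightarrow> bool" where
  "has_weak_deriv u g \<longleftrightarrow>
     (\<forall>a b. set_integrable lborel {a..b} g) \<and>
     (\<forall>a b. a \<le> b \<longrightarrow> u b - u a = (LINT t:{a..b}|lborel. g t))"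

definition L2 :: "(real \<Rightarrow> 'a::real_normed_vector) \<Rightarrow> bool" where
  "L2 f \<longleftrightarrow> f \<in> borel_measurable lborel \<and> integrable lborel (\<lambda>x. (norm (f x))^2)"

text \<open>The (a.e. unique) weak derivative, when it exists in L^2.\<close>
definition wderiv :: "(real \<Rightarrow> 'a::{banach,second_countable_topology}) \<Rightarrow> real \<Rightarrow> 'a" where
  "wderiv u = (SOME g. has_weak_deriv u g \<and> L2 g)"

definition in_E :: "(real \<Rightarrow> complex) \<Rightarrow> bool" where
  "in_E u \<longleftrightarrow> (\<exists>g. has_weak_deriv u g \<and> L2 g) \<and> L2 (\<lambda>x. 1 - (cmod (u x))^2)"

definition in_NE :: "(real \<Rightarrow> complex) \<Rightarrow> bool" where
  "in_NE u \<longleftrightarrow> in_E u \<and> (\<forall>x. cmod (u x) > 0)"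

definition is_lifting :: "(real \<Rightarrow> complex) \<Rightarrow> (real \<Rightarrow> real) \<Rightarrow> bool" where
  "is_lifting u \<theta> \<longleftrightarrow> (\<exists>g. has_weak_deriv \<theta> g \<and> L2 g) \<and>
     (\<forall>x. u x = complex_of_real (cmod (u x)) * cis (\<theta> x))"

text \<open>theta' for some lifting theta of u (independent of the choice a.e.).\<close>
definition lift_deriv :: "(real \<Rightarrow> complex) \<Rightarrow> real \<Rightarrow> real" where
  "lift_deriv u = (SOME g. \<exists>\<theta>. is_lifting u \<theta> \<and> has_weak_deriv \<theta> g \<and> L2 g)"

definition G :: "real \<Rightarrow> real" where
  "G s = s * (2 - s)"

definition momentum :: "(real \<Rightarrow> complex) \<Rightarrow> real" where
  "momentum u = (1/2) * (\<integral>x. G \<bar>1 - cmod (u x)\<bar> * lift_deriv u x \<partial>lborel)"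

definition in_H1 :: "(real \<Rightarrow> real) \<Rightarrow> bool" where
  "in_H1 v \<longleftrightarrow> L2 v \<and> (\<exists>g. has_weak_deriv v g \<and> L2 g)"

definition setX :: "((real \<Rightarrow> complex) \<times> (real \<Rightarrow> real)) set" where
  "setX = {(u, v). in_NE u \<and> in_H1 v \<and> (\<forall>x. cmod (u x) < 2)}"

definition setXqm :: "real \<Rightarrow> real \<Rightarrow> ((real \<Rightarrow> complex) \<times> (real \<Rightarrow> real)) set" where
  "setXqm q m = {(u, v) \<in> setX. momentum u = q \<and> (\<integral>x. (v x)^2 \<partial>lborel) = m}"

definition energy :: "real \<Rightarrow> real \<Rightarrow> (real \<Rightarrow> complex) \<Rightarrow> (real \<Rightarrow> real) \<Rightarrow> real" where
  "energy \<alpha> \<beta> u v = (\<integral>x. (cmod (wderiv u x))^2 / 2 + (wderiv v x)^2 / 2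
      + (1 - (cmod (u x))^2)^2 / 4 + \<beta> / 4 * (v x)^4
      - \<alpha> / 2 * (1 - (cmod (u x))^2) * (v x)^2 \<partial>lborel)"

text \<open>E_min as an infimum in the extended reals (empty set gives +infinity).\<close>
definition Emin :: "real \<Rightarrow> real \<Rightarrow> real \<Rightarrow> real \<Rightarrow> ereal" where
  "Emin \<alpha> \<beta> q m = (INF p \<in> setXqm q m. ereal (energy \<alpha> \<beta> (fst p) (snd p)))"

text \<open>Characterizing properties of the scalar dark soliton u_q (as given in the context).\<close>
definition is_dark_soliton :: "real \<Rightarrow> real \<Rightarrow> real \<Rightarrow> (real \<Rightarrow> complex) \<Rightarrow> bool" where
  "is_dark_soliton \<alpha> \<beta> q u \<longleftrightarrow>
     in_NE u \<and> (\<forall>x. 0 < cmod (u x) \<and> cmod (u x) < 1) \<and> momentum u = q \<and>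
     ereal (energy \<alpha> \<beta> u (\<lambda>_. 0)) = Emin \<alpha> \<beta> q 0 \<and>
     (\<exists>c u1 u2. 0 < c \<and> c < sqrt 2 \<and>
        (\<forall>x. (u has_vector_derivative u1 x) (at x)) \<and>
        (\<forall>x. (u1 has_vector_derivative u2 x) (at x)) \<and>
        (\<forall>x. \<i> * complex_of_real c * u1 x + u2 x + complex_of_real (1 - (cmod (u x))^2) * u x = 0))"

end

theory Submission
  imports Defs
begin


lemma loc_meas:
  fixes h :: "real \<Rightarrow> 'a::{banach,second_countable_topology}"
  assumes int: "\<And>a b. set_integrable lborel {a..b} h"
  shows "h \<in> borel_measurable borel"
proof -
  have m: "(\<lambda>x. indicator {- real n..real n} x *\<^sub>R h x) \<in> borel_measurable borel" for n
    using borel_measurable_integrable[OF int[of "- real n" "real n", unfolded set_integrable_def]]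
    by simp
  have "(\<lambda>n. indicator {- real n..real n} x *\<^sub>R h x) \<longlonglongrightarrow> h x" for x
  proof (rule tendsto_eventually)
    obtain n :: nat where "\<bar>x\<bar> \<le> real n" using real_arch_simple by blast
    then show "\<forall>\<^sub>F n in sequentially. indicator {- real n..real n} x *\<^sub>R h x = h x"
      unfolding eventually_sequentially
      by (intro exI[of _ n]) (auto simp: indicator_def)
  qed
  then show ?thesis
    by (rule borel_measurable_LIMSEQ_metric[OF m])
qed

lemma ae_zero_of_intervals:
  fixes h :: "real \<Rightarrow> real"
  assumes int: "\<And>a b. set_integrable lborel {a..b} h"
    and z: "\<And>a b. a \<le> b \<Longrightarrow> (LINT x:{a..b}|lborel. h x) = 0"
  shows "AE x in lborel. h x = 0"
proof -
  have hm[measurable]: "h \<in> borel_measurable borel" by (rule loc_meas[OF int])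
  define P where "P x = ennreal (max 0 (h x))" for x
  define N where "N x = ennreal (max 0 (- h x))" for x
  have Pm[measurable]: "P \<in> borel_measurable lborel" unfolding P_def by measurable
  have Nm[measurable]: "N \<in> borel_measurable lborel" unfolding N_def by measurable
  have key: "emeasure (density lborel P) {a..b} = emeasure (density lborel N) {a..b}
     \<and> emeasure (density lborel P) {a..b} \<noteq> \<infinity>" for a b
  proof (cases "a \<le> b")
    case False then show ?thesis by simp
  next
    case True
    have i: "integrable lborel (\<lambda>x. indicator {a..b} x * h x)"
      using int[of a b] by (simp add: set_integrable_def)
    have ip: "integrable lborel (\<lambda>x. indicator {a..b} x * max 0 (h x))"
      by (rule Bochner_Integration.integrable_bound[OF integrable_abs[OF i]]) (auto simp: indicator_def)
    have iN: "integrable lborel (\<lambda>x. indicator {a..b} x * max 0 (- h x))"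
      by (rule Bochner_Integration.integrable_bound[OF integrable_abs[OF i]]) (auto simp: indicator_def)
    have e1: "emeasure (density lborel P) {a..b} = ennreal (\<integral>x. indicator {a..b} x * max 0 (h x) \<partial>lborel)"
    proof -
      have "emeasure (density lborel P) {a..b} = (\<integral>\<^sup>+x. P x * indicator {a..b} x \<partial>lborel)"
        by (rule emeasure_density) auto
      also have "\<dots> = (\<integral>\<^sup>+x. ennreal (indicator {a..b} x * max 0 (h x)) \<partial>lborel)"
        by (rule nn_integral_cong) (auto simp: P_def indicator_def)
      also have "\<dots> = ennreal (\<integral>x. indicator {a..b} x * max 0 (h x) \<partial>lborel)"
        by (rule nn_integral_eq_integral[OF ip]) auto
      finally show ?thesis .
    qed
    have e2: "emeasure (density lborel N) {a..b} = ennreal (\<integral>x. indicator {a..b} x * max 0 (- h x) \<partial>lborel)"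
    proof -
      have "emeasure (density lborel N) {a..b} = (\<integral>\<^sup>+x. N x * indicator {a..b} x \<partial>lborel)"
        by (rule emeasure_density) auto
      also have "\<dots> = (\<integral>\<^sup>+x. ennreal (indicator {a..b} x * max 0 (- h x)) \<partial>lborel)"
        by (rule nn_integral_cong) (auto simp: N_def indicator_def)
      also have "\<dots> = ennreal (\<integral>x. indicator {a..b} x * max 0 (- h x) \<partial>lborel)"
        by (rule nn_integral_eq_integral[OF iN]) auto
      finally show ?thesis .
    qed
    have "(\<integral>x. indicator {a..b} x * max 0 (h x) \<partial>lborel) - (\<integral>x. indicator {a..b} x * max 0 (- h x) \<partial>lborel)
        = (\<integral>x. indicator {a..b} x * max 0 (h x) - indicator {a..b} x * max 0 (- h x) \<partial>lborel)"
      by (rule Bochner_Integration.integral_diff[OF ip iN, symmetric])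
    also have "\<dots> = (\<integral>x. indicator {a..b} x * h x \<partial>lborel)"
      by (rule Bochner_Integration.integral_cong) (auto simp: indicator_def)
    also have "\<dots> = 0" using z[OF True] by (simp add: set_lebesgue_integral_def)
    finally show ?thesis using e1 e2 by simp
  qed
  have "density lborel P = density lborel N"
  proof (rule measure_eqI_generator_eq[where E = "range (\<lambda>(a,b). {a..b::real})" and \<Omega> = UNIV
        and A = "\<lambda>n. {- real n..real n}"])
    show "Int_stable (range (\<lambda>(a, b). {a..b::real}))"
      unfolding Int_stable_def
      by (auto simp: Int_atLeastAtMost intro!: image_eqI[where x="(max _ _, min _ _)"])
    show "range (\<lambda>(a, b). {a..b::real}) \<subseteq> Pow UNIV" by simp
    show "emeasure (density lborel P) X = emeasure (density lborel N) X"
      if "X \<in> range (\<lambda>(a, b). {a..b})" for X using that key by auto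
    have s: "sets (density lborel f) = sigma_sets UNIV (range (\<lambda>(a, b). {a..b::real}))" for f
      by (simp add: borel_eq_atLeastAtMost)
    show "sets (density lborel P) = sigma_sets UNIV (range (\<lambda>(a, b). {a..b::real}))" by (rule s)
    show "sets (density lborel N) = sigma_sets UNIV (range (\<lambda>(a, b). {a..b::real}))" by (rule s)
    show "range (\<lambda>n. {- real n..real n}) \<subseteq> range (\<lambda>(a, b). {a..b})" by auto
    show "(\<Union>n. {- real n..real n}) = UNIV"
    proof -
      have "x \<in> (\<Union>n. {- real n..real n})" for x
      proof -
        obtain n :: nat where "\<bar>x\<bar> \<le> real n" using real_arch_simple by blast
        then show ?thesis by (auto intro!: exI[of _ n])
      qed
      then show ?thesis by blast
    qed
    show "emeasure (density lborel P) {- real n..real n} \<noteq> \<infinity>" for n using key by blast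
  qed
  then have "AE x in lborel. P x = N x"
    by (intro sigma_finite_measure.density_unique[OF sigma_finite_lborel]) auto
  then show ?thesis
    by eventually_elim (auto simp: P_def N_def max_def split: if_splits)
qed

lemma wd_Re:
  assumes "has_weak_deriv u g"
  shows "has_weak_deriv (\<lambda>x. Re (u x)) (\<lambda>x. Re (g x))"
  unfolding has_weak_deriv_def
proof (intro conjI allI impI)
  fix a b :: real
  have i: "integrable lborel (\<lambda>x. indicator {a..b} x *\<^sub>R g x)"
    using assms unfolding has_weak_deriv_def set_integrable_def by auto
  show "set_integrable lborel {a..b} (\<lambda>x. Re (g x))"
    unfolding set_integrable_def using integrable_Re[OF i] by simp
  assume "a \<le> b"
  then have "u b - u a = (\<integral>x. indicator {a..b} x *\<^sub>R g x \<partial>lborel)"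
    using assms unfolding has_weak_deriv_def set_lebesgue_integral_def by auto
  note eq = this
  have "Re (u b) - Re (u a) = Re (u b - u a)" by simp
  also have "\<dots> = Re (\<integral>x. indicator {a..b} x *\<^sub>R g x \<partial>lborel)" by (simp only: eq)
  also have "\<dots> = (\<integral>x. Re (indicator {a..b} x *\<^sub>R g x) \<partial>lborel)"
    by (rule integral_Re[OF i, symmetric])
  finally show "Re (u b) - Re (u a) = (LINT t:{a..b}|lborel. Re (g t))"
    unfolding set_lebesgue_integral_def by simp
qed

lemma wd_Im:
  assumes "has_weak_deriv u g"
  shows "has_weak_deriv (\<lambda>x. Im (u x)) (\<lambda>x. Im (g x))"
  unfolding has_weak_deriv_def
proof (intro conjI allI impI)
  fix a b :: real
  have i: "integrable lborel (\<lambda>x. indicator {a..b} x *\<^sub>R g x)"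
    using assms unfolding has_weak_deriv_def set_integrable_def by auto
  show "set_integrable lborel {a..b} (\<lambda>x. Im (g x))"
    unfolding set_integrable_def using integrable_Im[OF i] by simp
  assume "a \<le> b"
  then have "u b - u a = (\<integral>x. indicator {a..b} x *\<^sub>R g x \<partial>lborel)"
    using assms unfolding has_weak_deriv_def set_lebesgue_integral_def by auto
  note eq = this
  have "Im (u b) - Im (u a) = Im (u b - u a)" by simp
  also have "\<dots> = Im (\<integral>x. indicator {a..b} x *\<^sub>R g x \<partial>lborel)" by (simp only: eq)
  also have "\<dots> = (\<integral>x. Im (indicator {a..b} x *\<^sub>R g x) \<partial>lborel)"
    by (rule integral_Im[OF i, symmetric])
  finally show "Im (u b) - Im (u a) = (LINT t:{a..b}|lborel. Im (g t))"
    unfolding set_lebesgue_integral_def by simp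
qed

lemma wd_unique_real:
  fixes f1 f2 g1 g2 :: "real \<Rightarrow> real"
  assumes "has_weak_deriv f1 g1" "has_weak_deriv f2 g2" "\<And>x. f1 x - f2 x = c"
  shows "AE x in lborel. g1 x = g2 x"
proof -
  have "AE x in lborel. g1 x - g2 x = 0"
  proof (rule ae_zero_of_intervals)
    show "set_integrable lborel {a..b} (\<lambda>x. g1 x - g2 x)" for a b
      using assms(1,2) unfolding has_weak_deriv_def by auto
    show "(LINT x:{a..b}|lborel. g1 x - g2 x) = 0" if "a \<le> b" for a b
    proof -
      have "(LINT x:{a..b}|lborel. g1 x - g2 x) = (LINT x:{a..b}|lborel. g1 x) - (LINT x:{a..b}|lborel. g2 x)"
        using assms(1,2) unfolding has_weak_deriv_def by auto
      also have "\<dots> = (f1 b - f1 a) - (f2 b - f2 a)"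
        using assms(1,2) that unfolding has_weak_deriv_def by auto
      also have "\<dots> = 0" using assms(3)[of a] assms(3)[of b] by simp
      finally show ?thesis .
    qed
  qed
  then show ?thesis by auto
qed

lemma wd_unique_complex:
  fixes f1 f2 g1 g2 :: "real \<Rightarrow> complex"
  assumes "has_weak_deriv f1 g1" "has_weak_deriv f2 g2" "\<And>x. f1 x - f2 x = c"
  shows "AE x in lborel. g1 x = g2 x"
proof -
  have "AE x in lborel. Re (g1 x) = Re (g2 x)"
    by (rule wd_unique_real[OF wd_Re[OF assms(1)] wd_Re[OF assms(2)], of "Re c"])
       (metis assms(3) minus_complex.simps(1))
  moreover have "AE x in lborel. Im (g1 x) = Im (g2 x)"
    by (rule wd_unique_real[OF wd_Im[OF assms(1)] wd_Im[OF assms(2)], of "Im c"])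
       (metis assms(3) minus_complex.simps(2))
  ultimately show ?thesis by eventually_elim (simp add: complex_eq_iff)
qed

lemma wd_cont:
  fixes f g :: "real \<Rightarrow> 'a::euclidean_space"
  assumes "has_weak_deriv f g"
  shows "isCont f x"
proof -
  have si: "set_integrable lborel {x-1..x+1} g" using assms unfolding has_weak_deriv_def by auto
  have gi: "g integrable_on {x-1..x+1}" using set_borel_integral_eq_integral(1)[OF si] .
  have "continuous_on {x-1..x+1} (\<lambda>y. f (x-1) + integral {x-1..y} g)"
    by (intro continuous_intros indefinite_integral_continuous_1[OF gi])
  moreover have "f y = f (x-1) + integral {x-1..y} g" if "y \<in> {x-1..x+1}" for y
  proof -
    have si2: "set_integrable lborel {x-1..y} g" using assms unfolding has_weak_deriv_def by auto
    have "f y - f (x-1) = (LINT t:{x-1..y}|lborel. g t)" using assms that unfolding has_weak_deriv_def by auto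
    also have "\<dots> = integral {x-1..y} g" using set_borel_integral_eq_integral(2)[OF si2] .
    finally show ?thesis by (simp add: algebra_simps)
  qed
  ultimately have "continuous_on {x-1..x+1} f" using continuous_on_cong by (metis (no_types, lifting))
  then show ?thesis
    by (rule continuous_on_interior) auto
qed

lemma wd_FTC:
  fixes f g :: "real \<Rightarrow> 'a::euclidean_space"
  assumes S: "finite S" and c: "continuous_on UNIV f"
    and d: "\<And>x. x \<notin> S \<Longrightarrow> (f has_vector_derivative g x) (at x)"
    and m: "g \<in> borel_measurable borel" and B: "\<And>x. norm (g x) \<le> B"
  shows "has_weak_deriv f g"
  unfolding has_weak_deriv_def
proof (intro conjI allI impI)
  fix a b :: real
  have B0: "0 \<le> B" using B[of 0] norm_ge_zero order_trans by blast
  have ii: "integrable lborel (\<lambda>x. indicator {a..b} x * B)"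
    by (intro integrable_mult_left integrable_real_indicator) (auto simp: emeasure_lborel_Icc_eq)
  show si: "set_integrable lborel {a..b} g"
    unfolding set_integrable_def
    by (rule Bochner_Integration.integrable_bound[OF ii]) (use B B0 m in \<open>auto simp: indicator_def\<close>)
  assume ab: "a \<le> b"
  have "(g has_integral (f b - f a)) {a..b}"
    by (rule fundamental_theorem_of_calculus_interior_strong[OF S ab])
       (use d continuous_on_subset[OF c subset_UNIV] in \<open>auto\<close>)
  then show "f b - f a = (LINT t:{a..b}|lborel. g t)"
    using set_borel_integral_eq_integral(2)[OF si] by (simp add: integral_unique)
qed



definition clmp :: "real \<Rightarrow> real" where "clmp t = max 0 (min 1 t)"
definition dclmp :: "real \<Rightarrow> real" where "dclmp t = (if 0 < t \<and> t < 1 then 1 else 0)"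

lemma clmp_bounds: "0 \<le> clmp t" "clmp t \<le> 1" by (auto simp: clmp_def)
lemma clmp_cont[continuous_intros]: "continuous_on S f \<Longrightarrow> continuous_on S (\<lambda>x. clmp (f x))"
  unfolding clmp_def by (intro continuous_intros)
lemma clmp_meas[measurable]: "clmp \<in> borel_measurable borel"
  unfolding clmp_def by measurable
lemma dclmp_meas[measurable]: "dclmp \<in> borel_measurable borel"
  unfolding dclmp_def by measurable
lemma clmp_lo: "t \<le> 0 \<Longrightarrow> clmp t = 0" and clmp_hi: "1 \<le> t \<Longrightarrow> clmp t = 1"
  by (auto simp: clmp_def)
lemma dclmp_out: "t \<le> 0 \<or> 1 \<le> t \<Longrightarrow> dclmp t = 0" by (auto simp: dclmp_def)

lemma clmp_deriv:
  assumes "t \<noteq> 0" "t \<noteq> 1"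
  shows "(clmp has_real_derivative dclmp t) (at t)"
proof -
  consider "t < 0" | "0 < t \<and> t < 1" | "1 < t" using assms by linarith
  then show ?thesis
  proof cases
    case 1
    show ?thesis
      by (rule has_field_derivative_transform_within_open[of "\<lambda>_. 0" _ _ "{..<0}"])
         (use 1 in \<open>auto simp: clmp_def dclmp_def\<close>)
  next
    case 2
    show ?thesis
      by (rule has_field_derivative_transform_within_open[of "\<lambda>x. x" _ _ "{0<..<1}"])
         (use 2 in \<open>auto simp: clmp_def dclmp_def\<close>)
  next
    case 3
    show ?thesis
      by (rule has_field_derivative_transform_within_open[of "\<lambda>_. 1" _ _ "{1<..}"])
         (use 3 in \<open>auto simp: clmp_def dclmp_def\<close>)
  qed
qed

lemma clmp_deriv_comp:
  assumes "(h has_real_derivative h') (at x)" "h x \<noteq> 0" "h x \<noteq> 1"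
  shows "((\<lambda>x. clmp (h x)) has_real_derivative dclmp (h x) * h') (at x)"
  using DERIV_chain2[OF clmp_deriv[OF assms(2,3)] assms(1)] .

lemma L2_bound:
  fixes f :: "real \<Rightarrow> 'a::real_normed_vector"
  assumes m: "f \<in> borel_measurable borel" and b: "\<And>x. norm (f x) \<le> B * indicator {a..b} x"
  shows "L2 f"
  unfolding L2_def
proof
  show "f \<in> borel_measurable lborel" using m by simp
  have ii: "integrable lborel (\<lambda>x. indicator {a..b} x * B^2)"
    by (intro integrable_mult_left integrable_real_indicator) (auto simp: emeasure_lborel_Icc_eq)
  show "integrable lborel (\<lambda>x. (norm (f x))^2)"
  proof (rule Bochner_Integration.integrable_bound[OF ii])
    show "(\<lambda>x. (norm (f x))^2) \<in> borel_measurable lborel" using m by measurable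
    show "AE x in lborel. norm ((norm (f x))^2) \<le> norm (indicator {a..b} x * B^2)"
    proof (rule AE_I2)
      fix x
      have "norm (f x) \<le> B * indicator {a..b} x" by (rule b)
      then have "(norm (f x))^2 \<le> (B * indicator {a..b} x)^2"
        by (intro power_mono) auto
      then show "norm ((norm (f x))^2) \<le> norm (indicator {a..b} x * B^2)"
        by (auto simp: indicator_def power_mult_distrib)
    qed
  qed
qed

lemma int_ind_const:
  fixes a b c :: real
  assumes "a \<le> b"
  shows "(\<integral>x. indicator {a..b} x * c \<partial>lborel) = c * (b - a)"
  using assms by simp

lemma int_ind_const2:
  fixes a b c :: real
  assumes "a \<le> b"
  shows "(\<integral>x. indicator {a<..<b} x * c \<partial>lborel) = c * (b - a)"
  using assms by simp

lemma integrable_ind_const: "integrable lborel (\<lambda>x. indicator {a..b::real} x * (c::real))"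
  by (intro integrable_mult_left integrable_real_indicator) (auto simp: emeasure_lborel_Icc_eq)



lemma cis_meas[measurable]: "cis \<in> borel_measurable borel"
proof -
  have "continuous_on UNIV (\<lambda>x. cis x)" by (intro continuous_intros)
  then show ?thesis by (rule borel_measurable_continuous_onI[of "\<lambda>x. cis x", simplified])
qed

lemma clmp_mono: "s \<le> t \<Longrightarrow> clmp s \<le> clmp t" by (auto simp: clmp_def)

lemma cis_deriv:
  assumes "(\<theta> has_real_derivative d) (at x)"
  shows "((\<lambda>x. cis (\<theta> x)) has_vector_derivative (\<i> * complex_of_real d * cis (\<theta> x))) (at x)"
proof -
  have "((\<lambda>x. cis (\<theta> x)) has_derivative (\<lambda>t. (d * t) *\<^sub>R (\<i> * cis (\<theta> x)))) (at x)"
    using has_derivative_cis[OF assms[unfolded has_field_derivative_def]] by simp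
  moreover have "(\<lambda>t. (d * t) *\<^sub>R (\<i> * cis (\<theta> x))) = (\<lambda>t. t *\<^sub>R (\<i> * complex_of_real d * cis (\<theta> x)))"
    by (auto simp: scaleR_conv_of_real fun_eq_iff)
  ultimately show ?thesis by (simp add: has_vector_derivative_def)
qed

lemma cmod_sq_lemma:
  fixes a b t :: real
  shows "(cmod (complex_of_real a * cis t + complex_of_real r * (\<i> * complex_of_real b * cis t)))^2 = a^2 + r^2 * b^2"
proof -
  have "complex_of_real a * cis t + complex_of_real r * (\<i> * complex_of_real b * cis t) = Complex a (r*b) * cis t"
    by (simp add: complex_eq_iff)
  then have "cmod (complex_of_real a * cis t + complex_of_real r * (\<i> * complex_of_real b * cis t)) = cmod (Complex a (r*b))"
    by (simp add: norm_mult)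
  then show ?thesis by (simp add: cmod_def power_mult_distrib)
qed

lemma cmod_rcis: "0 \<le> r \<Longrightarrow> cmod (complex_of_real r * cis t) = r"
  by (simp add: norm_mult)



lemma test_fn:
  fixes e L D :: real
  assumes e: "0 < e" "e < 1" and L: "0 < L"
  assumes \<rho>_def: "\<rho> = (\<lambda>x. 1 - e * clmp x + e * clmp (x - 1 - L))"
    and \<theta>_def: "\<theta> = (\<lambda>x. D * clmp ((x - 1) / L))"
    and u_def: "u = (\<lambda>x. complex_of_real (\<rho> x) * cis (\<theta> x))"
  shows "(u, \<lambda>_. 0) \<in> setXqm ((1/2) * (e*(2-e)) * D) 0"
    and "energy \<alpha> \<beta> u (\<lambda>_. 0) \<le> e^2 + (e*(2-e))^2/2 + (1-e)^2*D^2/(2*L) + L*(e*(2-e))^2/4"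
proof -
  define d\<rho> where "d\<rho> x = - e * dclmp x + e * dclmp (x - 1 - L)" for x
  define d\<theta> where "d\<theta> x = D * (dclmp ((x - 1) / L) * (1 / L))" for x
  define gu where "gu x = complex_of_real (d\<rho> x) * cis (\<theta> x) + complex_of_real (\<rho> x) * (\<i> * complex_of_real (d\<theta> x) * cis (\<theta> x))" for x
  define S where "S = {0, 1, 1 + L, 2 + L}"
  have finS: "finite S" by (simp add: S_def)
  have \<rho>_bounds: "1 - e \<le> \<rho> x" "\<rho> x \<le> 1" for x
  proof -
    have "clmp (x - 1 - L) \<le> clmp x" by (rule clmp_mono) (use L in auto)
    then have b: "e * clmp (x - 1 - L) \<le> e * clmp x" using e by (intro mult_left_mono) auto
    have a: "e * clmp x \<le> e" using mult_left_mono[of "clmp x" 1 e] e clmp_bounds(2)[of x] by simp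
    have c: "0 \<le> e * clmp (x - 1 - L)" using e clmp_bounds(1) by simp
    show "1 - e \<le> \<rho> x" "\<rho> x \<le> 1" using a b c unfolding \<rho>_def by auto
  qed
  have \<rho>_pos: "0 < \<rho> x" for x using \<rho>_bounds(1)[of x] e by linarith
  have \<rho>_out: "\<rho> x = 1" if "x \<notin> {0..2+L}" for x
  proof (cases "x < 0")
    case True then show ?thesis using L by (simp add: \<rho>_def clmp_lo)
  next
    case False then have "x > 2 + L" using that by auto
    then show ?thesis using L by (simp add: \<rho>_def clmp_hi)
  qed
  have \<rho>_mid: "\<rho> x = 1 - e" if "x \<in> {1..1+L}" for x
    using that by (simp add: \<rho>_def clmp_hi clmp_lo)
  have d\<theta>_out: "d\<theta> x = 0" if "x \<notin> {1<..<1+L}" for x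
  proof -
    have "(x - 1) / L \<le> 0 \<or> 1 \<le> (x - 1) / L" using that L by (auto simp: field_simps)
    then show ?thesis by (simp add: d\<theta>_def dclmp_out)
  qed
  have d\<theta>_mid: "d\<theta> x = D / L" if "x \<in> {1<..<1+L}" for x
    using that L by (simp add: d\<theta>_def dclmp_def field_simps)
  have d\<rho>_mid: "d\<rho> x = 0" if "x \<in> {1<..<1+L}" for x
    using that L by (simp add: d\<rho>_def dclmp_def)
  have d\<rho>_bd: "\<bar>d\<rho> x\<bar> \<le> e" for x
    using e L by (auto simp: d\<rho>_def dclmp_def)
  have d\<rho>_out: "d\<rho> x = 0" if "x \<notin> {0..2+L}" for x
    using that L by (auto simp: d\<rho>_def dclmp_def)
  have cmod_u: "cmod (u x) = \<rho> x" for x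
    unfolding u_def using \<rho>_pos[of x] by (simp add: cmod_rcis)
  have cont_\<rho>: "continuous_on UNIV \<rho>" unfolding \<rho>_def by (intro continuous_intros)
  have cont_\<theta>: "continuous_on UNIV \<theta>" unfolding \<theta>_def using L by (intro continuous_intros) auto
  have cont_u: "continuous_on UNIV u" unfolding u_def
    by (intro continuous_intros continuous_on_compose2[OF cont_\<rho>] continuous_on_compose2[OF cont_\<theta>]) auto
  have der_\<rho>: "(\<rho> has_real_derivative d\<rho> x) (at x)" if "x \<notin> S" for x
  proof -
    have d1: "((\<lambda>x. clmp x) has_real_derivative dclmp x) (at x)"
      by (rule clmp_deriv) (use that in \<open>auto simp: S_def\<close>)
    have d2: "((\<lambda>x. clmp (x - 1 - L)) has_real_derivative dclmp (x - 1 - L) * 1) (at x)"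
      by (rule clmp_deriv_comp) (use that in \<open>auto simp: S_def intro!: derivative_eq_intros\<close>)
    have "(\<rho> has_real_derivative (0 - e * dclmp x + e * (dclmp (x - 1 - L) * 1))) (at x)"
      unfolding \<rho>_def by (intro DERIV_add DERIV_diff DERIV_const DERIV_cmult d1 d2)
    then show ?thesis by (simp add: d\<rho>_def)
  qed
  have der_\<theta>: "(\<theta> has_real_derivative d\<theta> x) (at x)" if "x \<notin> S" for x
  proof -
    have "((\<lambda>x. clmp ((x - 1) / L)) has_real_derivative dclmp ((x - 1) / L) * (1 / L)) (at x)"
      by (rule clmp_deriv_comp) (use that L in \<open>auto simp: S_def intro!: derivative_eq_intros\<close>)
    then show ?thesis unfolding \<theta>_def d\<theta>_def by (intro DERIV_cmult)
  qed
  have der_u: "(u has_vector_derivative gu x) (at x)" if "x \<notin> S" for x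
  proof -
    have "((\<lambda>x. complex_of_real (\<rho> x) * cis (\<theta> x)) has_vector_derivative
       (complex_of_real (\<rho> x) * (\<i> * complex_of_real (d\<theta> x) * cis (\<theta> x)) + complex_of_real (d\<rho> x) * cis (\<theta> x))) (at x)"
      by (intro has_vector_derivative_mult has_vector_derivative_of_real der_\<rho>[OF that] cis_deriv der_\<theta>[OF that])
    then show ?thesis unfolding u_def gu_def by (simp add: add.commute)
  qed
  define a where "a = e * (2 - e)"
  have a_eq: "a = 1 - (1 - e)^2" by (simp add: a_def power2_eq_square algebra_simps)
  have a_pos: "0 < a" using e by (simp add: a_def)
  have d\<theta>_bd: "\<bar>d\<theta> x\<bar> \<le> \<bar>D\<bar> / L" for x
    using L by (auto simp: d\<theta>_def dclmp_def abs_mult)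
  have gu_bd: "norm (gu x) \<le> e + \<bar>D\<bar> / L" for x
  proof -
    have "norm (gu x) \<le> norm (complex_of_real (d\<rho> x) * cis (\<theta> x)) + norm (complex_of_real (\<rho> x) * (\<i> * complex_of_real (d\<theta> x) * cis (\<theta> x)))"
      unfolding gu_def by (rule norm_triangle_ineq)
    also have "\<dots> = \<bar>d\<rho> x\<bar> + \<bar>\<rho> x\<bar> * \<bar>d\<theta> x\<bar>" by (simp add: norm_mult)
    also have "\<dots> \<le> e + 1 * (\<bar>D\<bar> / L)"
      using d\<rho>_bd[of x] d\<theta>_bd[of x] \<rho>_bounds[of x] \<rho>_pos[of x]
      by (intro add_mono mult_mono) auto
    finally show ?thesis by simp
  qed
  have gu_out: "gu x = 0" if "x \<notin> {0..2+L}" for x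
  proof -
    have "x \<notin> {1<..<1+L}" using that by auto
    then show ?thesis using that d\<rho>_out d\<theta>_out by (simp add: gu_def)
  qed
  have meas_\<rho>[measurable]: "\<rho> \<in> borel_measurable borel" unfolding \<rho>_def by measurable
  have meas_\<theta>[measurable]: "\<theta> \<in> borel_measurable borel" unfolding \<theta>_def by measurable
  have meas_d\<rho>[measurable]: "d\<rho> \<in> borel_measurable borel" unfolding d\<rho>_def[abs_def] by measurable
  have meas_d\<theta>[measurable]: "d\<theta> \<in> borel_measurable borel" unfolding d\<theta>_def[abs_def] by measurable
  have meas_gu[measurable]: "gu \<in> borel_measurable borel" unfolding gu_def[abs_def] by measurable
  have meas_u[measurable]: "u \<in> borel_measurable borel" unfolding u_def by measurable
  have hwu: "has_weak_deriv u gu"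
    by (rule wd_FTC[OF finS cont_u der_u meas_gu gu_bd])
  have L2gu: "L2 gu"
    by (rule L2_bound[OF meas_gu, of "e + \<bar>D\<bar> / L" 0 "2 + L"])
       (use gu_bd gu_out in \<open>auto simp: indicator_def\<close>)
  have hw0: "has_weak_deriv (\<lambda>_::real. 0::real) (\<lambda>_. 0)"
    by (rule wd_FTC[of "{}" _ _ 0]) auto
  have L20: "L2 (\<lambda>_::real. 0::real)"
    by (rule L2_bound[of _ 0 0 0]) auto
  define W where "W = wderiv u"
  have W: "has_weak_deriv u W \<and> L2 W"
    unfolding W_def wderiv_def by (rule someI[of _ gu]) (use hwu L2gu in auto)
  have W_ae: "AE x in lborel. W x = gu x"
    by (rule wd_unique_complex[OF conjunct1[OF W] hwu, of 0]) simp
  define W0 where "W0 = wderiv (\<lambda>_::real. 0::real)"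
  have W0: "has_weak_deriv (\<lambda>_::real. 0::real) W0 \<and> L2 W0"
    unfolding W0_def wderiv_def by (rule someI[of _ "\<lambda>_. 0"]) (use hw0 L20 in auto)
  have W0_ae: "AE x in lborel. W0 x = 0"
    by (rule wd_unique_real[OF conjunct1[OF W0] hw0, of 0]) simp
  have meas_W[measurable]: "W \<in> borel_measurable borel" using W unfolding L2_def by auto
  have meas_W0[measurable]: "W0 \<in> borel_measurable borel" using W0 unfolding L2_def by auto
  define F where "F x = ((d\<rho> x)^2 + (\<rho> x)^2 * (d\<theta> x)^2) / 2 + (1 - (\<rho> x)^2)^2 / 4" for x
  have meas_F[measurable]: "F \<in> borel_measurable borel" unfolding F_def[abs_def] by measurable
  have en: "energy \<alpha> \<beta> u (\<lambda>_. 0) = (\<integral>x. F x \<partial>lborel)"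
    unfolding energy_def W_def[symmetric] W0_def[symmetric]
  proof (rule integral_cong_AE)
    show "(\<lambda>x. (cmod (W x))\<^sup>2 / 2 + (W0 x)\<^sup>2 / 2 + (1 - (cmod (u x))\<^sup>2)\<^sup>2 / 4 + \<beta> / 4 * 0 ^ 4 -
          \<alpha> / 2 * (1 - (cmod (u x))\<^sup>2) * 0\<^sup>2) \<in> borel_measurable lborel" by measurable
    show "F \<in> borel_measurable lborel" by measurable
    show "AE x in lborel. (cmod (W x))\<^sup>2 / 2 + (W0 x)\<^sup>2 / 2 + (1 - (cmod (u x))\<^sup>2)\<^sup>2 / 4 + \<beta> / 4 * 0 ^ 4 -
          \<alpha> / 2 * (1 - (cmod (u x))\<^sup>2) * 0\<^sup>2 = F x"
      using W_ae W0_ae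
    proof eventually_elim
      case (elim x)
      then show ?case unfolding F_def using cmod_sq_lemma[of "d\<rho> x" "\<theta> x" "\<rho> x" "d\<theta> x"]
        by (simp add: cmod_u gu_def)
    qed
  qed
  define c1 where "c1 = e^2/2 + a^2/4"
  define c2 where "c2 = (1-e)^2 * (D/L)^2 / 2 + a^2/4"
  define Fb where "Fb x = indicator {0..1} x * c1 + indicator {1+L..2+L} x * c1 + indicator {1..1+L} x * c2" for x
  have c1_nn: "0 \<le> c1" unfolding c1_def by simp
  have c2_nn: "0 \<le> c2" unfolding c2_def by simp
  have F_nn: "0 \<le> F x" for x unfolding F_def by simp
  have F_le: "F x \<le> Fb x" for x
  proof -
    consider "x \<in> {1<..<1+L}" | "x \<notin> {0..2+L}" | "x \<in> {0..1} \<union> {1+L..2+L}" "x \<notin> {1<..<1+L}"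
      by fastforce
    then show ?thesis
    proof cases
      case 1
      then have "F x = c2" using \<rho>_mid[of x] d\<rho>_mid[of x] d\<theta>_mid[of x]
        by (simp add: F_def c2_def a_eq power_mult_distrib)
      moreover have "indicator {1..1+L} x = (1::real)" using 1 by (simp add: indicator_def)
      ultimately show ?thesis unfolding Fb_def using c1_nn by (simp add: indicator_def)
    next
      case 2
      have "x \<notin> {1<..<1+L}" using 2 by auto
      then have "F x = 0" using 2 \<rho>_out[of x] d\<rho>_out[of x] d\<theta>_out[of x] by (simp add: F_def)
      then show ?thesis unfolding Fb_def using c1_nn c2_nn by (simp add: indicator_def)
    next
      case 3
      have r1: "0 \<le> 1 - (\<rho> x)^2" using \<rho>_bounds[of x] \<rho>_pos[of x] by (simp add: power_le_one)
      have r2: "1 - (\<rho> x)^2 \<le> a"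
        using \<rho>_bounds[of x] e unfolding a_eq by (simp add: power_mono)
      have "(1 - (\<rho> x)^2)^2 \<le> a^2" using r1 r2 by (intro power_mono) auto
      moreover have "(d\<rho> x)^2 \<le> e^2"
        using d\<rho>_bd[of x] e by (metis abs_le_square_iff abs_of_pos)
      moreover have "d\<theta> x = 0" using 3 d\<theta>_out by auto
      ultimately have "F x \<le> c1" unfolding F_def c1_def by simp
      moreover have "c1 \<le> Fb x" using 3 c1_nn c2_nn unfolding Fb_def by (auto simp: indicator_def)
      ultimately show ?thesis by linarith
    qed
  qed
  have int_Fb: "integrable lborel Fb"
    unfolding Fb_def[abs_def] by (intro Bochner_Integration.integrable_add integrable_ind_const)
  have int_F: "integrable lborel F"
    by (rule Bochner_Integration.integrable_bound[OF int_Fb]) (use F_nn F_le in \<open>auto intro!: AE_I2 order_trans[OF _ abs_ge_self]\<close>)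
  have "(\<integral>x. Fb x \<partial>lborel) = c1 * (1 - 0) + c1 * ((2 + L) - (1 + L)) + c2 * ((1 + L) - 1)"
    unfolding Fb_def[abs_def] using L
    by (simp add: Bochner_Integration.integral_add integrable_ind_const Bochner_Integration.integrable_add del: integral_mult_left_zero)
  also have "\<dots> = e^2 + (e*(2-e))^2/2 + (1-e)^2*D^2/(2*L) + L*(e*(2-e))^2/4"
    using L unfolding c1_def c2_def a_def by (simp add: field_simps power2_eq_square)
  finally have intFb: "(\<integral>x. Fb x \<partial>lborel) = e^2 + (e*(2-e))^2/2 + (1-e)^2*D^2/(2*L) + L*(e*(2-e))^2/4" .
  show "energy \<alpha> \<beta> u (\<lambda>_. 0) \<le> e^2 + (e*(2-e))^2/2 + (1-e)^2*D^2/(2*L) + L*(e*(2-e))^2/4"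
    unfolding en intFb[symmetric] by (rule integral_mono[OF int_F int_Fb F_le])
  have cont_d: "continuous_on UNIV (\<lambda>x. 1 - (cmod (u x))^2)"
    by (intro continuous_intros continuous_on_compose2[OF cont_u]) auto
  have inE: "in_E u"
    unfolding in_E_def
  proof
    show "\<exists>g. has_weak_deriv u g \<and> L2 g" using hwu L2gu by blast
    show "L2 (\<lambda>x. 1 - (cmod (u x))^2)"
    proof (rule L2_bound[of _ 1 0 "2 + L"])
      show "(\<lambda>x. 1 - (cmod (u x))^2) \<in> borel_measurable borel" by measurable
      show "norm (1 - (cmod (u x))^2) \<le> 1 * indicator {0..2+L} x" for x
      proof (cases "x \<in> {0..2+L}")
        case True
        have "0 \<le> 1 - (\<rho> x)^2" "1 - (\<rho> x)^2 \<le> 1"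
          using \<rho>_bounds[of x] \<rho>_pos[of x] by (auto simp: power_le_one)
        then show ?thesis using True by (simp add: cmod_u)
      next
        case False then show ?thesis using \<rho>_out[of x] by (simp add: cmod_u)
      qed
    qed
  qed
  have inNE: "in_NE u" unfolding in_NE_def using inE \<rho>_pos by (simp add: cmod_u)
  have inH1: "in_H1 (\<lambda>_. 0)" unfolding in_H1_def using L20 hw0 by blast
  have lt2: "cmod (u x) < 2" for x using \<rho>_bounds[of x] by (simp add: cmod_u)
  have meas_d\<theta>': "d\<theta> \<in> borel_measurable borel" by measurable
  have d\<theta>_bd2: "norm (d\<theta> x) \<le> (\<bar>D\<bar> / L) * indicator {1..1+L} x" for x
  proof (cases "x \<in> {1<..<1+L}")
    case True then show ?thesis using d\<theta>_bd[of x] by (simp add: indicator_def)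
  next
    case False then show ?thesis using d\<theta>_out[of x] L by (simp add: indicator_def)
  qed
  have hw\<theta>: "has_weak_deriv \<theta> d\<theta>"
    by (rule wd_FTC[OF finS cont_\<theta> _ meas_d\<theta>' ])
       (use der_\<theta> d\<theta>_bd in \<open>auto simp: has_real_derivative_iff_has_vector_derivative\<close>)
  have L2\<theta>: "L2 d\<theta>" by (rule L2_bound[OF meas_d\<theta>' d\<theta>_bd2])
  have ueq: "u x = complex_of_real (cmod (u x)) * cis (\<theta> x)" for x
    unfolding cmod_u by (simp add: u_def)
  have lift\<theta>: "is_lifting u \<theta>"
    unfolding is_lifting_def using hw\<theta> L2\<theta> ueq by blast
  define g0 where "g0 = lift_deriv u"
  have "\<exists>\<theta>1. is_lifting u \<theta>1 \<and> has_weak_deriv \<theta>1 g0 \<and> L2 g0"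
    unfolding g0_def lift_deriv_def by (rule someI[of _ d\<theta>]) (use lift\<theta> hw\<theta> L2\<theta> in blast)
  then obtain \<theta>1 where l1: "is_lifting u \<theta>1" and hw1: "has_weak_deriv \<theta>1 g0" and L2g0: "L2 g0" by blast
  have cis_eq: "cis (\<theta>1 x) = cis (\<theta> x)" for x
  proof -
    have "complex_of_real (\<rho> x) * cis (\<theta>1 x) = complex_of_real (\<rho> x) * cis (\<theta> x)"
      using l1 unfolding is_lifting_def by (metis cmod_u u_def)
    then show ?thesis using \<rho>_pos[of x] by simp
  qed
  have kx: "\<exists>k::int. \<theta>1 x - \<theta> x = 2 * pi * k" for x
  proof -
    have "sin (\<theta>1 x) = sin (\<theta> x) \<and> cos (\<theta>1 x) = cos (\<theta> x)"
      using cis_eq[of x] by (metis cis.sel(1) cis.sel(2))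
    then obtain n :: int where "\<theta>1 x = \<theta> x + 2 * pi * n" using sin_cos_eq_iff by blast
    then show ?thesis by auto
  qed
  have cont1: "continuous_on UNIV \<theta>1"
    using wd_cont[OF hw1] by (simp add: continuous_on_eq_continuous_at)
  have "(\<lambda>x. \<theta>1 x - \<theta> x) constant_on UNIV"
  proof (rule continuous_discrete_range_constant)
    show "connected (UNIV :: real set)" by simp
    show "continuous_on UNIV (\<lambda>x. \<theta>1 x - \<theta> x)" by (intro continuous_intros cont1 cont_\<theta>)
    show "\<exists>e>0. \<forall>y. y \<in> UNIV \<and> \<theta>1 y - \<theta> y \<noteq> \<theta>1 x - \<theta> x \<longrightarrow> e \<le> norm (\<theta>1 y - \<theta> y - (\<theta>1 x - \<theta> x))" for x
    proof (intro exI[of _ "2 * pi"] conjI allI impI)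
      fix y
      assume "y \<in> UNIV \<and> \<theta>1 y - \<theta> y \<noteq> \<theta>1 x - \<theta> x"
      moreover obtain k :: int where k: "\<theta>1 x - \<theta> x = 2 * pi * k" using kx by blast
      moreover obtain j :: int where j: "\<theta>1 y - \<theta> y = 2 * pi * j" using kx by blast
      ultimately have "j \<noteq> k" by auto
      then have "1 \<le> \<bar>j - k\<bar>" by presburger
      then have "1 \<le> \<bar>real_of_int j - real_of_int k\<bar>" by (metis of_int_1_le_iff of_int_abs of_int_diff)
      then have "2 * pi * 1 \<le> 2 * pi * \<bar>real_of_int j - real_of_int k\<bar>" by (intro mult_left_mono) auto
      also have "\<dots> = norm (\<theta>1 y - \<theta> y - (\<theta>1 x - \<theta> x))"
        unfolding j k by (simp add: abs_mult right_diff_distrib[symmetric])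
      finally show "2 * pi \<le> norm (\<theta>1 y - \<theta> y - (\<theta>1 x - \<theta> x))" by simp
    qed simp
  qed
  then obtain c where c: "\<And>x. \<theta>1 x - \<theta> x = c" unfolding constant_on_def by blast
  have g0_ae: "AE x in lborel. g0 x = d\<theta> x"
    by (rule wd_unique_real[OF hw1 hw\<theta> c])
  have meas_g0[measurable]: "g0 \<in> borel_measurable borel" using L2g0 unfolding L2_def by auto
  have "(\<integral>x. G \<bar>1 - cmod (u x)\<bar> * lift_deriv u x \<partial>lborel) = (\<integral>x. indicator {1<..<1+L} x * (a * (D / L)) \<partial>lborel)"
    unfolding g0_def[symmetric]
  proof (rule integral_cong_AE)
    show "(\<lambda>x. G \<bar>1 - cmod (u x)\<bar> * g0 x) \<in> borel_measurable lborel" unfolding G_def by measurable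
    show "(\<lambda>x. indicator {1<..<1+L} x * (a * (D / L))) \<in> borel_measurable lborel" by measurable
    show "AE x in lborel. G \<bar>1 - cmod (u x)\<bar> * g0 x = indicator {1<..<1+L} x * (a * (D / L))"
      using g0_ae
    proof eventually_elim
      case (elim x)
      show ?case
      proof (cases "x \<in> {1<..<1+L}")
        case True
        then have "\<rho> x = 1 - e" using \<rho>_mid[of x] by auto
        then show ?thesis using True elim d\<theta>_mid[OF True] e by (simp add: cmod_u G_def a_def)
      next
        case False then show ?thesis using elim d\<theta>_out[OF False] by simp
      qed
    qed
  qed
  also have "\<dots> = a * D" using L by (simp add: int_ind_const2)
  finally have mom: "momentum u = (1/2) * (e*(2-e)) * D" unfolding momentum_def a_def by simp
  show "(u, \<lambda>_. 0) \<in> setXqm ((1/2) * (e*(2-e)) * D) 0"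
    unfolding setXqm_def setX_def using inNE inH1 lt2 mom by simp
qed



definition bump :: "real \<Rightarrow> real \<Rightarrow> real" where "bump L x = clmp (2 - \<bar>x\<bar> / L)"
definition dbump :: "real \<Rightarrow> real \<Rightarrow> real" where "dbump L x = dclmp (2 - \<bar>x\<bar> / L) * (- sgn x / L)"

lemma bump_facts:
  fixes L s :: real
  assumes L: "0 < L"
  defines "v \<equiv> \<lambda>x. s * bump L x"
  shows "in_H1 v"
    and "2 * L \<le> (\<integral>x. (bump L x)^2 \<partial>lborel)" "(\<integral>x. (bump L x)^2 \<partial>lborel) \<le> 4 * L"
    and "(\<integral>x. (v x)^2 \<partial>lborel) = s^2 * (\<integral>x. (bump L x)^2 \<partial>lborel)"
    and "integrable lborel (\<lambda>x. (wderiv v x)^2)"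
    and "(\<integral>x. (wderiv v x)^2 \<partial>lborel) \<le> s^2 * (4 / L)"
    and "integrable lborel (\<lambda>x. (v x)^4)"
    and "(\<integral>x. (v x)^4 \<partial>lborel) \<le> s^4 * (\<integral>x. (bump L x)^2 \<partial>lborel)"
    and "\<And>x. (v x)^2 \<le> s^2 * indicator {-2*L..2*L} x"
    and "\<And>x. s^2 * indicator {-L..L} x \<le> (v x)^2"
    and "v \<in> borel_measurable borel"
proof -
  have b01: "0 \<le> bump L x" "bump L x \<le> 1" for x unfolding bump_def by (rule clmp_bounds)+
  have b_in: "bump L x = 1" if "\<bar>x\<bar> \<le> L" for x
    unfolding bump_def using that L by (intro clmp_hi) (simp add: field_simps)
  have b_out: "bump L x = 0" if "2 * L \<le> \<bar>x\<bar>" for x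
    unfolding bump_def using that L by (intro clmp_lo) (simp add: field_simps)
  have db_out: "dbump L x = 0" if "\<bar>x\<bar> \<notin> {L<..<2*L}" for x
  proof -
    have "2 - \<bar>x\<bar> / L \<le> 0 \<or> 1 \<le> 2 - \<bar>x\<bar> / L" using that L by (auto simp: field_simps)
    then show ?thesis unfolding dbump_def by (simp add: dclmp_out)
  qed
  have db_bd: "\<bar>dbump L x\<bar> \<le> 1 / L" for x
    using L by (auto simp: dbump_def dclmp_def abs_mult sgn_if)
  have meas_b[measurable]: "bump L \<in> borel_measurable borel" unfolding bump_def[abs_def] by measurable
  have meas_db[measurable]: "dbump L \<in> borel_measurable borel" unfolding dbump_def[abs_def] by measurable
  have meas_v[measurable]: "v \<in> borel_measurable borel" unfolding v_def by measurable
  then show "v \<in> borel_measurable borel" .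
  have cont_b: "continuous_on UNIV (bump L)" unfolding bump_def[abs_def] using L by (intro continuous_intros) auto
  have der_b: "(bump L has_real_derivative dbump L x) (at x)" if "x \<notin> {-2*L, -L, 0, L, 2*L}" for x
  proof (cases "x > 0")
    case True
    have "((\<lambda>x. clmp (2 - x / L)) has_real_derivative dclmp (2 - x / L) * (0 - 1 / L)) (at x)"
      by (rule clmp_deriv_comp) (use that True L in \<open>auto simp: field_simps intro!: derivative_eq_intros\<close>)
    moreover have "dbump L x = dclmp (2 - x / L) * (0 - 1 / L)" using True by (simp add: dbump_def)
    ultimately have "((\<lambda>x. clmp (2 - x / L)) has_real_derivative dbump L x) (at x)" by simp
    then show ?thesis
      by (rule has_field_derivative_transform_within_open[where S = "{0<..}"])
         (use True in \<open>auto simp: bump_def dbump_def\<close>)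
  next
    case False
    then have x0: "x < 0" using that by auto
    have "((\<lambda>x. clmp (2 + x / L)) has_real_derivative dclmp (2 + x / L) * (0 + 1 / L)) (at x)"
      by (rule clmp_deriv_comp) (use that x0 L in \<open>auto simp: field_simps intro!: derivative_eq_intros\<close>)
    moreover have "dbump L x = dclmp (2 + x / L) * (0 + 1 / L)" using x0 by (simp add: dbump_def)
    ultimately have "((\<lambda>x. clmp (2 + x / L)) has_real_derivative dbump L x) (at x)" by simp
    then show ?thesis
      by (rule has_field_derivative_transform_within_open[where S = "{..<0}"])
         (use x0 in \<open>auto simp: bump_def dbump_def\<close>)
  qed
  have hwv: "has_weak_deriv v (\<lambda>x. s * dbump L x)"
  proof (rule wd_FTC[of "{-2*L, -L, 0, L, 2*L}" _ _ "\<bar>s\<bar> * (1 / L)"])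
    show "continuous_on UNIV v" unfolding v_def by (intro continuous_intros cont_b)
    show "(v has_vector_derivative s * dbump L x) (at x)" if "x \<notin> {-2*L, -L, 0, L, 2*L}" for x
      unfolding v_def using DERIV_cmult[OF der_b[OF that], of s]
      by (simp add: has_real_derivative_iff_has_vector_derivative)
    show "norm (s * dbump L x) \<le> \<bar>s\<bar> * (1 / L)" for x
      using mult_left_mono[OF db_bd[of x], of "\<bar>s\<bar>"] by (simp add: abs_mult)
  qed auto
  have dv_bd: "norm (s * dbump L x) \<le> (\<bar>s\<bar> / L) * indicator {-2*L..2*L} x" for x
  proof (cases "\<bar>x\<bar> \<le> 2 * L")
    case True then have "indicator {-2*L..2*L} x = (1::real)" by (auto simp: indicator_def)
    then show ?thesis using mult_left_mono[OF db_bd[of x], of "\<bar>s\<bar>"] by (simp add: abs_mult)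
  next
    case False then show ?thesis using db_out[of x] by (simp add: indicator_def)
  qed
  have L2dv: "L2 (\<lambda>x. s * dbump L x)" by (rule L2_bound[OF _ dv_bd]) measurable
  have v_bd: "norm (v x) \<le> \<bar>s\<bar> * indicator {-2*L..2*L} x" for x
  proof (cases "\<bar>x\<bar> \<le> 2 * L")
    case True then have "indicator {-2*L..2*L} x = (1::real)" by (auto simp: indicator_def)
    then show ?thesis using b01[of x] by (simp add: v_def abs_mult mult_left_le)
  next
    case False then show ?thesis using b_out[of x] by (simp add: v_def indicator_def)
  qed
  have L2v: "L2 v" by (rule L2_bound[OF meas_v v_bd])
  show "in_H1 v" unfolding in_H1_def using L2v hwv L2dv by blast
  define W where "W = wderiv v"
  have W: "has_weak_deriv v W \<and> L2 W"
    unfolding W_def wderiv_def by (rule someI[of _ "\<lambda>x. s * dbump L x"]) (use hwv L2dv in auto)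
  have W_ae: "AE x in lborel. W x = s * dbump L x"
    by (rule wd_unique_real[OF conjunct1[OF W] hwv, of 0]) simp
  show "integrable lborel (\<lambda>x. (wderiv v x)^2)"
    using W unfolding W_def L2_def by simp
  have "(\<integral>x. (wderiv v x)^2 \<partial>lborel) = (\<integral>x. (s * dbump L x)^2 \<partial>lborel)"
    unfolding W_def[symmetric]
    by (rule integral_cong_AE) (use W W_ae in \<open>auto simp: L2_def\<close>)
  also have "\<dots> \<le> (\<integral>x. indicator {-2*L..2*L} x * (s^2 / L^2) \<partial>lborel)"
  proof (rule integral_mono)
    show "integrable lborel (\<lambda>x. indicator {-2*L..2*L} x * (s^2 / L^2))" by (rule integrable_ind_const)
    show "integrable lborel (\<lambda>x. (s * dbump L x)^2)" using L2dv unfolding L2_def by simp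
    show "(s * dbump L x)^2 \<le> indicator {-2*L..2*L} x * (s^2 / L^2)" for x
    proof -
      have "(s * dbump L x)^2 \<le> ((\<bar>s\<bar> / L) * indicator {-2*L..2*L} x)^2"
        using dv_bd[of x] by (metis abs_ge_zero norm_ge_zero order_trans power2_abs power_mono real_norm_def)
      moreover have "((\<bar>s\<bar> / L) * indicator {-2*L..2*L} x)^2 = indicator {-2*L..2*L} x * (s^2 / L^2)"
        by (simp add: indicator_def power_divide power_mult_distrib)
      ultimately show ?thesis by simp
    qed
  qed
  also have "\<dots> = s^2 * (4 / L)" using L by (simp add: power2_eq_square field_simps)
  finally show "(\<integral>x. (wderiv v x)^2 \<partial>lborel) \<le> s^2 * (4 / L)" .
  have ib2: "integrable lborel (\<lambda>x. (bump L x)^2)"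
    by (rule Bochner_Integration.integrable_bound[OF integrable_ind_const[of "-2*L" "2*L" 1]])
       (use b01 b_out in \<open>auto intro!: AE_I2 simp: indicator_def power_le_one\<close>)
  show "2 * L \<le> (\<integral>x. (bump L x)^2 \<partial>lborel)"
  proof -
    have "(\<integral>x. indicator {-L..L} x * 1 \<partial>lborel) \<le> (\<integral>x. (bump L x)^2 \<partial>lborel)"
      by (rule integral_mono[OF integrable_ind_const ib2]) (use b_in in \<open>auto simp: indicator_def\<close>)
    then show ?thesis using L by simp
  qed
  show "(\<integral>x. (bump L x)^2 \<partial>lborel) \<le> 4 * L"
  proof -
    have "(\<integral>x. (bump L x)^2 \<partial>lborel) \<le> (\<integral>x. indicator {-2*L..2*L} x * 1 \<partial>lborel)"
      by (rule integral_mono[OF ib2 integrable_ind_const])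
         (use b01 b_out in \<open>auto simp: indicator_def power_le_one\<close>)
    then show ?thesis using L by simp
  qed
  show "(\<integral>x. (v x)^2 \<partial>lborel) = s^2 * (\<integral>x. (bump L x)^2 \<partial>lborel)"
    unfolding v_def by (simp add: power_mult_distrib)
  have b4le: "(bump L x)^4 \<le> (bump L x)^2" for x
  proof -
    have "(bump L x)^4 = (bump L x)^2 * (bump L x)^2" by algebra
    also have "\<dots> \<le> (bump L x)^2 * 1" using b01[of x] by (intro mult_left_mono) (auto simp: power_le_one)
    finally show "(bump L x)^4 \<le> (bump L x)^2" by simp
  qed
  have ib4: "integrable lborel (\<lambda>x. (bump L x)^4)"
    by (rule Bochner_Integration.integrable_bound[OF ib2]) (use b4le in \<open>auto intro!: AE_I2\<close>)
  show "integrable lborel (\<lambda>x. (v x)^4)"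
    unfolding v_def power_mult_distrib using ib4 by simp
  have "(\<integral>x. (v x)^4 \<partial>lborel) = s^4 * (\<integral>x. (bump L x)^4 \<partial>lborel)"
    unfolding v_def by (simp add: power_mult_distrib)
  also have "\<dots> \<le> s^4 * (\<integral>x. (bump L x)^2 \<partial>lborel)"
  proof (rule mult_left_mono)
    show "(\<integral>x. (bump L x)^4 \<partial>lborel) \<le> (\<integral>x. (bump L x)^2 \<partial>lborel)"
    proof (rule integral_mono[OF ib4 ib2])
      fix x
      have "(bump L x)^4 = (bump L x)^2 * (bump L x)^2" by algebra
      also have "\<dots> \<le> (bump L x)^2 * 1" using b01[of x] by (intro mult_left_mono) (auto simp: power_le_one)
      finally show "(bump L x)^4 \<le> (bump L x)^2" by simp
    qed
  qed simp
  finally show "(\<integral>x. (v x)^4 \<partial>lborel) \<le> s^4 * (\<integral>x. (bump L x)^2 \<partial>lborel)" .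
  show "(v x)^2 \<le> s^2 * indicator {-2*L..2*L} x" for x
  proof -
    have "(v x)^2 \<le> (\<bar>s\<bar> * indicator {-2*L..2*L} x)^2"
      using v_bd[of x] by (metis abs_ge_zero norm_ge_zero order_trans power2_abs power_mono real_norm_def)
    moreover have "(\<bar>s\<bar> * indicator {-2*L..2*L} x)^2 = s^2 * indicator {-2*L..2*L} x"
      by (simp add: indicator_def power_mult_distrib)
    ultimately show ?thesis by simp
  qed
  show "s^2 * indicator {-L..L} x \<le> (v x)^2" for x
    using b_in[of x] by (auto simp: v_def indicator_def)
qed



lemma wderiv0: "AE x in lborel. wderiv (\<lambda>_::real. 0::real) x = 0"
  "wderiv (\<lambda>_::real. 0::real) \<in> borel_measurable borel"
proof -
  have hw0: "has_weak_deriv (\<lambda>_::real. 0::real) (\<lambda>_. 0)"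
    by (rule wd_FTC[of "{}" _ _ 0]) auto
  have L20: "L2 (\<lambda>_::real. 0::real)"
    by (rule L2_bound[of _ 0 0 0]) auto
  have W0: "has_weak_deriv (\<lambda>_::real. 0::real) (wderiv (\<lambda>_::real. 0::real)) \<and> L2 (wderiv (\<lambda>_::real. 0::real))"
    unfolding wderiv_def by (rule someI[of _ "\<lambda>_. 0"]) (use hw0 L20 in auto)
  show "AE x in lborel. wderiv (\<lambda>_::real. 0::real) x = 0"
    by (rule wd_unique_real[OF conjunct1[OF W0] hw0, of 0]) simp
  show "wderiv (\<lambda>_::real. 0::real) \<in> borel_measurable borel" using W0 unfolding L2_def by auto
qed

lemma inE_facts:
  assumes "in_E u"
  shows "u \<in> borel_measurable borel" "integrable lborel (\<lambda>x. (cmod (wderiv u x))^2)"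
    "wderiv u \<in> borel_measurable borel"
    "integrable lborel (\<lambda>x. (1 - (cmod (u x))^2)^2)"
proof -
  obtain g where g: "has_weak_deriv u g" "L2 g" using assms unfolding in_E_def by blast
  have W: "has_weak_deriv u (wderiv u) \<and> L2 (wderiv u)"
    unfolding wderiv_def by (rule someI[of _ g]) (use g in auto)
  have "continuous_on UNIV u" using wd_cont[OF conjunct1[OF W]] by (simp add: continuous_on_eq_continuous_at)
  then show "u \<in> borel_measurable borel" by (rule borel_measurable_continuous_onI)
  show "integrable lborel (\<lambda>x. (cmod (wderiv u x))^2)" "wderiv u \<in> borel_measurable borel"
    using W unfolding L2_def by auto
  show "integrable lborel (\<lambda>x. (1 - (cmod (u x))^2)^2)"
    using assms unfolding in_E_def L2_def by simp
qed

lemma energy_split: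
  fixes u :: "real \<Rightarrow> complex" and v :: "real \<Rightarrow> real"
  assumes uE: "in_E u"
    and vm: "v \<in> borel_measurable borel" and wvm: "wderiv v \<in> borel_measurable borel"
    and Bint: "integrable lborel (\<lambda>x. (wderiv v x)^2/2 + \<beta>/4*(v x)^4 - \<alpha>/2*(1 - (cmod (u x))^2)*(v x)^2)"
  shows "energy \<alpha> \<beta> u v = energy \<alpha> \<beta> u (\<lambda>_. 0) +
     (\<integral>x. (wderiv v x)^2/2 + \<beta>/4*(v x)^4 - \<alpha>/2*(1 - (cmod (u x))^2)*(v x)^2 \<partial>lborel)"
proof -
  note f = inE_facts[OF uE]
  have [measurable]: "u \<in> borel_measurable borel" "wderiv u \<in> borel_measurable borel" by (fact f(1)) (fact f(3))
  have [measurable]: "v \<in> borel_measurable borel" "wderiv v \<in> borel_measurable borel" by (fact vm) (fact wvm)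
  have [measurable]: "wderiv (\<lambda>_::real. 0::real) \<in> borel_measurable borel" by (rule wderiv0(2))
  define A where "A x = (cmod (wderiv u x))^2 / 2 + (1 - (cmod (u x))^2)^2 / 4" for x
  define B where "B x = (wderiv v x)^2/2 + \<beta>/4*(v x)^4 - \<alpha>/2*(1 - (cmod (u x))^2)*(v x)^2" for x
  have intA: "integrable lborel A" unfolding A_def[abs_def] using f(2) f(4) by auto
  have intB: "integrable lborel B" unfolding B_def[abs_def] by (rule Bint)
  have e0: "energy \<alpha> \<beta> u (\<lambda>_. 0) = (\<integral>x. A x \<partial>lborel)"
    unfolding energy_def
  proof (rule integral_cong_AE)
    show "(\<lambda>x. (cmod (wderiv u x))\<^sup>2 / 2 + (wderiv (\<lambda>_. 0) x)\<^sup>2 / 2 + (1 - (cmod (u x))\<^sup>2)\<^sup>2 / 4 +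
          \<beta> / 4 * 0 ^ 4 - \<alpha> / 2 * (1 - (cmod (u x))\<^sup>2) * 0\<^sup>2) \<in> borel_measurable lborel" by measurable
    show "A \<in> borel_measurable lborel" unfolding A_def[abs_def] by measurable
    show "AE x in lborel. (cmod (wderiv u x))\<^sup>2 / 2 + (wderiv (\<lambda>_. 0) x)\<^sup>2 / 2 + (1 - (cmod (u x))\<^sup>2)\<^sup>2 / 4 +
          \<beta> / 4 * 0 ^ 4 - \<alpha> / 2 * (1 - (cmod (u x))\<^sup>2) * 0\<^sup>2 = A x"
      using wderiv0(1) by eventually_elim (simp add: A_def)
  qed
  have "energy \<alpha> \<beta> u v = (\<integral>x. A x + B x \<partial>lborel)"
    unfolding energy_def A_def B_def by (rule Bochner_Integration.integral_cong) (auto simp: algebra_simps)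
  also have "\<dots> = (\<integral>x. A x \<partial>lborel) + (\<integral>x. B x \<partial>lborel)"
    by (rule Bochner_Integration.integral_add[OF intA intB])
  finally show ?thesis unfolding e0 B_def .
qed

lemma H1_zero_mass:
  assumes "in_H1 v" "(\<integral>x. (v x)^2 \<partial>lborel) = 0"
  shows "v = (\<lambda>_. 0)"
proof -
  obtain g where g: "has_weak_deriv v g" using assms(1) unfolding in_H1_def by blast
  have cont: "continuous_on UNIV v" using wd_cont[OF g] by (simp add: continuous_on_eq_continuous_at)
  have int: "integrable lborel (\<lambda>x. (v x)^2)" using assms(1) unfolding in_H1_def L2_def by simp
  have "AE x in lborel. (v x)^2 = 0"
    using integral_nonneg_eq_0_iff_AE[OF int] assms(2) by simp
  then have "AE x in lebesgue. x \<in> {x. v x = 0}" by (intro AE_completion) simp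
  moreover have "closed {x. v x = 0}"
    using closed_Collect_eq[OF cont continuous_on_const] by simp
  ultimately have "v x = 0" for x using mem_closed_if_AE_lebesgue by blast
  then show ?thesis by auto
qed

lemma Emin_le: "p \<in> setXqm q m \<Longrightarrow> Emin \<alpha> \<beta> q m \<le> ereal (energy \<alpha> \<beta> (fst p) (snd p))"
  unfolding Emin_def by (rule INF_lower)

lemma part2:
  assumes "0 < q" "q < pi / 2"
  shows "Emin \<alpha> \<beta> q 0 < ereal (sqrt 2 * q)"
proof -
  define e where "e = q / 4"
  define a where "a = e * (2 - e)"
  define D where "D = 2 * q / a"
  define L where "L = sqrt 2 * (1 - e) * D / a"
  have pi2: "pi < 4" using pi_less_4 .
  have e: "0 < e" "e < 1" using assms pi2 by (auto simp: e_def)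
  have a: "0 < a" "a \<le> 2 * e" using e by (auto simp: a_def)
  have D: "0 < D" using a assms by (simp add: D_def)
  have s2: "sqrt 2 * sqrt 2 = (2::real)" by simp
  have s2p: "0 < sqrt (2::real)" by simp
  have s2': "sqrt 2 * (sqrt 2 * x) = (2::real) * x" for x by (simp add: mult.assoc[symmetric])
  have L: "0 < L" using s2p e D a by (simp add: L_def)
  define \<rho> where "\<rho> = (\<lambda>x. 1 - e * clmp x + e * clmp (x - 1 - L))"
  define \<theta> where "\<theta> = (\<lambda>x. D * clmp ((x - 1) / L))"
  define u where "u = (\<lambda>x. complex_of_real (\<rho> x) * cis (\<theta> x))"
  note T = test_fn[OF e L \<rho>_def \<theta>_def u_def]
  have qq: "(1/2) * (e*(2-e)) * D = q" using a by (simp add: D_def a_def[symmetric])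
  have mem: "(u, \<lambda>_. 0) \<in> setXqm q 0" using T(1) unfolding qq .
  have en: "energy \<alpha> \<beta> u (\<lambda>_. 0) \<le> e^2 + a^2/2 + (1-e)^2*D^2/(2*L) + L*a^2/4"
    using T(2)[of \<alpha> \<beta>] unfolding a_def .
  have aD: "a * D = 2 * q" using a by (simp add: D_def)
  have "(1-e)^2*D^2/(2*L) + L*a^2/4 = sqrt 2 * (1 - e) * q"
  proof -
    have "(1-e)^2*D^2/(2*L) = (1-e) * (a * D) / (2 * sqrt 2)"
      using e a D s2p unfolding L_def by (simp add: field_simps power2_eq_square)
    moreover have "L*a^2/4 = sqrt 2 * (1-e) * (a * D) / 4"
      using a unfolding L_def by (simp add: field_simps power2_eq_square)
    moreover have "(1-e) * (2*q) / (2 * sqrt 2) + sqrt 2 * (1-e) * (2*q) / 4 = sqrt 2 * (1 - e) * q"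
      using s2p s2 by (simp add: field_simps s2')
    ultimately show ?thesis unfolding aD by simp
  qed
  moreover have "e^2 + a^2/2 < sqrt 2 * e * q"
  proof -
    have "a^2 \<le> (2*e)^2" using a by (intro power_mono) auto
    moreover have "sqrt 2 * e * q = sqrt 2 * 4 * e^2" by (simp add: e_def power2_eq_square)
    moreover have "3 * e^2 < sqrt 2 * 4 * e^2"
    proof -
      have "(3/4::real) < sqrt 2" by (rule real_less_rsqrt) (simp add: power2_eq_square)
      then show ?thesis using e by simp
    qed
    moreover have "(2*e)^2 = 4*e^2" by (simp add: power2_eq_square)
    ultimately show ?thesis by linarith
  qed
  ultimately have "energy \<alpha> \<beta> u (\<lambda>_. 0) < sqrt 2 * q" using en by (simp add: algebra_simps)
  then have "ereal (energy \<alpha> \<beta> u (\<lambda>_. 0)) < ereal (sqrt 2 * q)" by simp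
  moreover have "Emin \<alpha> \<beta> q 0 \<le> ereal (energy \<alpha> \<beta> u (\<lambda>_. 0))"
    using Emin_le[OF mem] by simp
  ultimately show ?thesis by (rule le_less_trans[rotated])
qed



lemma int_wv2:
  fixes w v :: "real \<Rightarrow> real"
  assumes w2: "integrable lborel (\<lambda>x. (w x)^2)" and wm[measurable]: "w \<in> borel_measurable borel"
    and vm[measurable]: "v \<in> borel_measurable borel"
    and vb: "\<And>x. (v x)^2 \<le> K * indicator {a..b} x"
  shows "integrable lborel (\<lambda>x. w x * (v x)^2)"
proof (rule Bochner_Integration.integrable_bound)
  show "integrable lborel (\<lambda>x. \<bar>K\<bar> * (((w x)^2 + indicator {a..b} x * 1) / 2))"
    using w2 integrable_ind_const[of a b 1] by auto
  show "(\<lambda>x. w x * (v x)^2) \<in> borel_measurable lborel" by measurable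
  show "AE x in lborel. norm (w x * (v x)^2) \<le> norm (\<bar>K\<bar> * (((w x)^2 + indicator {a..b} x * 1) / 2))"
  proof (rule AE_I2)
    fix x
    have "\<bar>w x\<bar> * indicator {a..b} x \<le> ((w x)^2 + indicator {a..b} x * 1) / 2"
    proof (cases "x \<in> {a..b}")
      case True
      have "0 \<le> (\<bar>w x\<bar> - 1)^2" by simp
      then show ?thesis using True by (simp add: power2_eq_square algebra_simps)
    qed simp
    moreover have "(v x)^2 \<le> \<bar>K\<bar> * indicator {a..b} x" using vb[of x] by (auto simp: indicator_def)
    ultimately have "\<bar>w x\<bar> * (v x)^2 \<le> \<bar>w x\<bar> * (\<bar>K\<bar> * indicator {a..b} x)"
      by (intro mult_left_mono) auto
    also have "\<dots> = \<bar>K\<bar> * (\<bar>w x\<bar> * indicator {a..b} x)" by simp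
    also have "\<dots> \<le> \<bar>K\<bar> * (((w x)^2 + indicator {a..b} x * 1) / 2)"
      by (intro mult_left_mono) (use \<open>\<bar>w x\<bar> * indicator {a..b} x \<le> _\<close> in auto)
    finally show "norm (w x * (v x)^2) \<le> norm (\<bar>K\<bar> * (((w x)^2 + indicator {a..b} x * 1) / 2))"
      by (simp add: abs_mult)
  qed
qed

lemma bump_energy:
  fixes u :: "real \<Rightarrow> complex" and m L :: real
  assumes uNE: "in_NE u" and u2: "\<And>x. cmod (u x) < 2" and mom: "momentum u = q"
    and m: "0 < m" and L: "0 < L"
    and C_def: "C = (\<integral>x. (bump L x)^2 \<partial>lborel)"
    and v_def: "v = (\<lambda>x. sqrt (m / C) * bump L x)"
  shows "(u, v) \<in> setXqm q m"
    and "energy \<alpha> \<beta> u v = energy \<alpha> \<beta> u (\<lambda>_. 0) + (\<integral>x. (wderiv v x)^2 \<partial>lborel) / 2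
           + \<beta>/4 * (\<integral>x. (v x)^4 \<partial>lborel) - \<alpha>/2 * (\<integral>x. (1 - (cmod (u x))^2) * (v x)^2 \<partial>lborel)"
    and "2 * L \<le> C" "C \<le> 4 * L"
    and "(\<integral>x. (wderiv v x)^2 \<partial>lborel) \<le> (m / C) * (4 / L)"
    and "(\<integral>x. (v x)^4 \<partial>lborel) \<le> m^2 / C"
    and "\<And>x. (v x)^2 \<le> (m / C) * indicator {-2*L..2*L} x"
    and "\<And>x. (m / C) * indicator {-L..L} x \<le> (v x)^2"
    and "integrable lborel (\<lambda>x. (1 - (cmod (u x))^2) * (v x)^2)"
    and "integrable lborel (\<lambda>x. (v x)^4)"
    and "v \<in> borel_measurable borel"
proof -
  define s where "s = sqrt (m / C)"
  have vd: "v = (\<lambda>x. s * bump L x)" unfolding v_def s_def ..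
  note Bs = bump_facts(1,4,5,6,7,8,9,10,11)[of L s, OF L, folded vd]
  note Bc = bump_facts(2,3)[of L, OF L]
  have C: "2 * L \<le> C" "C \<le> 4 * L" using Bc unfolding C_def by auto
  then show "2 * L \<le> C" "C \<le> 4 * L" by auto
  have Cpos: "0 < C" using C L by linarith
  have s2: "s^2 = m / C" unfolding s_def using m Cpos by simp
  have s4: "s^4 = (m / C)^2" using s2 by (metis power2_eq_square power4_eq_xxxx mult.assoc)
  have uE: "in_E u" using uNE unfolding in_NE_def by simp
  note uf = inE_facts[OF uE]
  have [measurable]: "u \<in> borel_measurable borel" by (rule uf(1))
  have [measurable]: "v \<in> borel_measurable borel" using Bs(9) by (simp add: vd)
  then show "v \<in> borel_measurable borel" .
  have wvm[measurable]: "wderiv v \<in> borel_measurable borel"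
  proof -
    obtain g where g: "has_weak_deriv v g" "L2 g" using Bs(1) unfolding in_H1_def vd by blast
    have "has_weak_deriv v (wderiv v) \<and> L2 (wderiv v)"
      unfolding wderiv_def by (rule someI[of _ g]) (use g in blast)
    then show ?thesis unfolding L2_def by auto
  qed
  have "(\<integral>x. (v x)^2 \<partial>lborel) = s^2 * C" unfolding C_def using Bs(2) unfolding vd .
  then have vm2: "(\<integral>x. (v x)^2 \<partial>lborel) = m" using s2 Cpos by simp
  show "(u, v) \<in> setXqm q m"
    unfolding setXqm_def setX_def using uNE u2 mom Bs(1) vm2 by (simp add: vd)
  show vb: "(v x)^2 \<le> (m / C) * indicator {-2*L..2*L} x" for x using Bs(7)[of x] s2 by (simp add: vd)
  show "(m / C) * indicator {-L..L} x \<le> (v x)^2" for x using Bs(8)[of x] s2 by (simp add: vd)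
  show "(\<integral>x. (wderiv v x)^2 \<partial>lborel) \<le> (m / C) * (4 / L)" using Bs(4) s2 by (simp add: vd)
  show "(\<integral>x. (v x)^4 \<partial>lborel) \<le> m^2 / C"
    using Bs(6) s4 C_def Cpos by (simp add: vd power2_eq_square)
  have w2: "integrable lborel (\<lambda>x. (1 - (cmod (u x))^2)^2)" by (rule uf(4))
  show iwv: "integrable lborel (\<lambda>x. (1 - (cmod (u x))^2) * (v x)^2)"
    by (rule int_wv2[OF w2 _ _ vb]) measurable
  show "integrable lborel (\<lambda>x. (v x)^4)" using Bs(5) by (simp add: vd)
  have iW: "integrable lborel (\<lambda>x. (wderiv v x)^2)" using Bs(3) by (simp add: vd)
  have intB: "integrable lborel (\<lambda>x. (wderiv v x)^2/2 + \<beta>/4*(v x)^4 - \<alpha>/2*(1 - (cmod (u x))^2)*(v x)^2)"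
  proof -
    have "integrable lborel (\<lambda>x. (wderiv v x)^2/2 + \<beta>/4*(v x)^4 - \<alpha>/2*((1 - (cmod (u x))^2)*(v x)^2))"
      using iW Bs(5) iwv by (auto simp: vd)
    then show ?thesis by (simp add: mult.assoc)
  qed
  have "energy \<alpha> \<beta> u v = energy \<alpha> \<beta> u (\<lambda>_. 0) +
     (\<integral>x. (wderiv v x)^2/2 + \<beta>/4*(v x)^4 - \<alpha>/2*(1 - (cmod (u x))^2)*(v x)^2 \<partial>lborel)"
    by (rule energy_split[OF uE _ wvm intB]) measurable
  also have "(\<integral>x. (wderiv v x)^2/2 + \<beta>/4*(v x)^4 - \<alpha>/2*(1 - (cmod (u x))^2)*(v x)^2 \<partial>lborel)
     = (\<integral>x. (wderiv v x)^2 \<partial>lborel) / 2 + \<beta>/4 * (\<integral>x. (v x)^4 \<partial>lborel) - \<alpha>/2 * (\<integral>x. (1 - (cmod (u x))^2) * (v x)^2 \<partial>lborel)"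
  proof -
    have "(\<integral>x. (wderiv v x)^2/2 + \<beta>/4*(v x)^4 - \<alpha>/2*(1 - (cmod (u x))^2)*(v x)^2 \<partial>lborel)
       = (\<integral>x. (wderiv v x)^2/2 + \<beta>/4*(v x)^4 - \<alpha>/2*((1 - (cmod (u x))^2)*(v x)^2) \<partial>lborel)"
      by (simp add: mult.assoc)
    also have "\<dots> = (\<integral>x. (wderiv v x)^2/2 + \<beta>/4*(v x)^4 \<partial>lborel) - (\<integral>x. \<alpha>/2*((1 - (cmod (u x))^2)*(v x)^2) \<partial>lborel)"
      using iW Bs(5) iwv by (intro Bochner_Integration.integral_diff) (auto simp: vd)
    also have "(\<integral>x. (wderiv v x)^2/2 + \<beta>/4*(v x)^4 \<partial>lborel) = (\<integral>x. (wderiv v x)^2/2 \<partial>lborel) + (\<integral>x. \<beta>/4*(v x)^4 \<partial>lborel)"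
      using iW Bs(5) by (intro Bochner_Integration.integral_add) (auto simp: vd)
    finally show ?thesis by simp
  qed
  finally show "energy \<alpha> \<beta> u v = energy \<alpha> \<beta> u (\<lambda>_. 0) + (\<integral>x. (wderiv v x)^2 \<partial>lborel) / 2
           + \<beta>/4 * (\<integral>x. (v x)^4 \<partial>lborel) - \<alpha>/2 * (\<integral>x. (1 - (cmod (u x))^2) * (v x)^2 \<partial>lborel)"
    by simp
qed



lemma part1:
  assumes \<alpha>: "0 < \<alpha>" and \<beta>: "0 \<le> \<beta>" and m0: "0 \<le> m"
  shows "Emin \<alpha> \<beta> q m \<le> Emin \<alpha> \<beta> q 0"
proof (cases "m = 0")
  case True then show ?thesis by simp
next
  case False
  then have m: "0 < m" using m0 by simp
  show ?thesis
    unfolding Emin_def[of \<alpha> \<beta> q 0]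
  proof (rule INF_greatest)
    fix p assume p: "p \<in> setXqm q 0"
    obtain u v0 where pe: "p = (u, v0)" by (cases p)
    have uNE: "in_NE u" and u2: "\<And>x. cmod (u x) < 2" and mom: "momentum u = q"
      and v0H: "in_H1 v0" and v0m: "(\<integral>x. (v0 x)^2 \<partial>lborel) = 0"
      using p unfolding pe setXqm_def setX_def by auto
    have v0z: "v0 = (\<lambda>_. 0)" by (rule H1_zero_mass[OF v0H v0m])
    have uE: "in_E u" using uNE unfolding in_NE_def by simp
    define E0 where "E0 = energy \<alpha> \<beta> u (\<lambda>_. 0)"
    have "Emin \<alpha> \<beta> q m \<le> ereal E0"
    proof (rule ereal_le_epsilon2)
      fix \<eta> :: real assume \<eta>: "0 < \<eta>"
      define w where "w x = 1 - (cmod (u x))^2" for x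
      define W2 where "W2 = (\<integral>x. (w x)^2 \<partial>lborel)"
      have W2nn: "0 \<le> W2" unfolding W2_def by simp
      define t where "t = \<eta> / (\<alpha> * W2 + 1)"
      have t: "0 < t" unfolding t_def using \<eta> \<alpha> W2nn by (simp add: add_nonneg_pos)
      define K where "K = m + \<beta> * m^2 / 8 + \<alpha> * m^2 / (8 * t)"
      have K: "0 \<le> K" unfolding K_def using m \<beta> \<alpha> t by simp
      define L where "L = max 1 (2 * K / \<eta>) + 1"
      have L1: "1 \<le> L" and L0: "0 < L" unfolding L_def by auto
      have KL: "K / L \<le> \<eta> / 2"
      proof -
        have "2 * K / \<eta> \<le> L" unfolding L_def by linarith
        then have "2 * K \<le> L * \<eta>" using \<eta> by (simp add: field_simps)
        then show ?thesis using L0 by (simp add: field_simps)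
      qed
      define C where "C = (\<integral>x. (bump L x)^2 \<partial>lborel)"
      define v where "v = (\<lambda>x. sqrt (m / C) * bump L x)"
      note BE = bump_energy[OF uNE u2 mom m L0 C_def v_def]
      note BE2 = bump_energy(2)[OF uNE u2 mom m L0 C_def v_def, where \<alpha>=\<alpha> and \<beta>=\<beta>]
      have Cpos: "0 < C" using BE(3) L0 by linarith
      have mC: "m / C \<le> m / (2 * L)" using BE(3) m L0 by (intro divide_left_mono) auto
      have mC0: "0 \<le> m / C" using m Cpos by simp
      define I1 where "I1 = (\<integral>x. (wderiv v x)^2 \<partial>lborel)"
      define I2 where "I2 = (\<integral>x. (v x)^4 \<partial>lborel)"
      define I3 where "I3 = (\<integral>x. w x * (v x)^2 \<partial>lborel)"
      have en: "energy \<alpha> \<beta> u v = E0 + I1 / 2 + \<beta>/4 * I2 - \<alpha>/2 * I3"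
        using BE2 unfolding E0_def I1_def I2_def I3_def w_def by simp
      have b1: "I1 / 2 \<le> m / L"
      proof -
        have "I1 / 2 \<le> (m / C) * (2 / L)" using BE(5) unfolding I1_def by (simp add: mult.commute)
        also have "\<dots> \<le> (m / (2 * L)) * (2 / L)" using mC L0 by (intro mult_right_mono) auto
        also have "\<dots> = (m / L) * (1 / L)" using L0 by (simp add: field_simps)
        also have "\<dots> \<le> (m / L) * 1" using L1 m L0 by (intro mult_left_mono) auto
        finally show ?thesis by simp
      qed
      have I2b: "I2 \<le> m^2 / (2 * L)"
      proof -
        have "I2 \<le> m^2 / C" using BE(6) unfolding I2_def .
        also have "\<dots> \<le> m^2 / (2 * L)" using BE(3) m L0 by (intro divide_left_mono) auto
        finally show ?thesis .
      qed
      have b2: "\<beta>/4 * I2 \<le> \<beta> * m^2 / (8 * L)"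
      proof -
        have "\<beta>/4 * I2 \<le> \<beta>/4 * (m^2 / (2 * L))" using I2b \<beta> by (intro mult_left_mono) auto
        then show ?thesis by (simp add: field_simps)
      qed
      have w2i: "integrable lborel (\<lambda>x. (w x)^2)" unfolding w_def using inE_facts(4)[OF uE] .
      have iwv: "integrable lborel (\<lambda>x. w x * (v x)^2)" using BE(9) unfolding w_def .
      have b3: "- I3 \<le> (t * W2 + I2 / t) / 2"
      proof -
        have "(\<integral>x. - (w x * (v x)^2) \<partial>lborel) \<le> (\<integral>x. (t * (w x)^2 + (v x)^4 / t) / 2 \<partial>lborel)"
        proof (rule integral_mono)
          show "integrable lborel (\<lambda>x. - (w x * (v x)^2))" using iwv by simp
          show "integrable lborel (\<lambda>x. (t * (w x)^2 + (v x)^4 / t) / 2)" using w2i BE(10) by simp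
          show "- (w x * (v x)^2) \<le> (t * (w x)^2 + (v x)^4 / t) / 2" for x
          proof -
            have "0 \<le> (t * w x + (v x)^2)^2 / t" using t by simp
            moreover have "(t * w x + (v x)^2)^2 / t = t * (w x)^2 + 2 * (w x * (v x)^2) + (v x)^4 / t"
              using t by (simp add: field_simps power2_eq_square power4_eq_xxxx)
            ultimately show ?thesis by simp
          qed
        qed
        also have "\<dots> = (t * W2 + I2 / t) / 2"
          unfolding W2_def I2_def using w2i BE(10) by simp
        finally show ?thesis unfolding I3_def by simp
      qed
      have b3': "- (\<alpha>/2 * I3) \<le> \<alpha> * t * W2 / 4 + \<alpha> * m^2 / (8 * L * t)"
      proof -
        have "- (\<alpha>/2 * I3) = \<alpha>/2 * (- I3)" by simp
        also have "\<dots> \<le> \<alpha>/2 * ((t * W2 + I2 / t) / 2)" using b3 \<alpha> by (intro mult_left_mono) auto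
        also have "\<dots> = \<alpha> * t * W2 / 4 + \<alpha> / 4 * (I2 / t)" by (simp add: field_simps)
        also have "\<dots> \<le> \<alpha> * t * W2 / 4 + \<alpha> / 4 * ((m^2 / (2 * L)) / t)"
          using I2b \<alpha> t by (intro add_left_mono mult_left_mono divide_right_mono) auto
        also have "\<dots> = \<alpha> * t * W2 / 4 + \<alpha> * m^2 / (8 * L * t)" by (simp add: field_simps)
        finally show ?thesis .
      qed
      have atW: "\<alpha> * t * W2 \<le> \<eta>"
      proof -
        have "\<alpha> * t * W2 = \<eta> * (\<alpha> * W2 / (\<alpha> * W2 + 1))" unfolding t_def by (simp add: field_simps)
        also have "\<dots> \<le> \<eta> * 1"
        proof (intro mult_left_mono)
          have "0 \<le> \<alpha> * W2" using \<alpha> W2nn by simp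
          then show "\<alpha> * W2 / (\<alpha> * W2 + 1) \<le> 1" by (simp add: divide_le_eq_1)
        qed (use \<eta> in auto)
        finally show ?thesis by simp
      qed
      have "K / L = m / L + \<beta> * m^2 / (8 * L) + \<alpha> * m^2 / (8 * L * t)"
        unfolding K_def using L0 t by (simp add: field_simps)
      then have "energy \<alpha> \<beta> u v \<le> E0 + K / L + \<alpha> * t * W2 / 4"
        using en b1 b2 b3' by linarith
      also have "\<dots> \<le> E0 + \<eta>"
      proof -
        have "\<alpha> * t * W2 / 4 \<le> \<eta> / 4" using atW by simp
        then show ?thesis using KL \<eta> by linarith
      qed
      finally have "energy \<alpha> \<beta> u v \<le> E0 + \<eta>" .
      moreover have "Emin \<alpha> \<beta> q m \<le> ereal (energy \<alpha> \<beta> u v)" using Emin_le[OF BE(1)] by simp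
      ultimately show "Emin \<alpha> \<beta> q m \<le> ereal E0 + ereal \<eta>"
        by (metis ereal_less_eq(3) order_trans plus_ereal.simps(1))
    qed
    then show "Emin \<alpha> \<beta> q m \<le> ereal (energy \<alpha> \<beta> (fst p) (snd p))"
      unfolding pe E0_def v0z by simp
  qed
qed



lemma part3:
  assumes \<alpha>: "0 < \<alpha>" and \<beta>: "0 \<le> \<beta>" and m: "0 < m"
    and ds: "is_dark_soliton \<alpha> \<beta> q uq"
    and cond: "m * \<beta> < 2 * \<alpha> * (\<integral>x. 1 - (cmod (uq x))^2 \<partial>lborel)"
  shows "Emin \<alpha> \<beta> q m < Emin \<alpha> \<beta> q 0"
proof -
  have uNE: "in_NE uq" and ub: "\<And>x. 0 < cmod (uq x) \<and> cmod (uq x) < 1" and mom: "momentum uq = q"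
    and E0: "ereal (energy \<alpha> \<beta> uq (\<lambda>_. 0)) = Emin \<alpha> \<beta> q 0"
    using ds unfolding is_dark_soliton_def by auto
  have u2: "cmod (uq x) < 2" for x using ub[of x] by linarith
  have uE: "in_E uq" using uNE unfolding in_NE_def by simp
  have [measurable]: "uq \<in> borel_measurable borel" by (rule inE_facts(1)[OF uE])
  define w where "w x = 1 - (cmod (uq x))^2" for x
  have wpos: "0 < w x" for x
  proof -
    have "(cmod (uq x))^2 < 1" using ub[of x] by (simp add: power_less_one_iff)
    then show ?thesis unfolding w_def by simp
  qed
  have wm[measurable]: "w \<in> borel_measurable borel" unfolding w_def[abs_def] by measurable
  define W where "W = (\<integral>x. w x \<partial>lborel)"
  have mb: "0 \<le> m * \<beta>" using m \<beta> by simp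
  have wint: "integrable lborel w"
  proof (rule ccontr)
    assume "\<not> integrable lborel w"
    then have "W = 0" unfolding W_def by (rule not_integrable_integral_eq)
    then show False using cond mb unfolding W_def w_def by simp
  qed
  define \<gamma> where "\<gamma> = \<alpha> * W / 2 - \<beta> * m / 4"
  have \<gamma>: "0 < \<gamma>" using cond unfolding \<gamma>_def W_def w_def by (simp add: algebra_simps)
  have lim: "(\<lambda>n. \<integral>x. indicator {- real n..real n} x * w x \<partial>lborel) \<longlonglongrightarrow> W"
    unfolding W_def
  proof (rule integral_dominated_convergence[where w = w])
    show "w \<in> borel_measurable lborel" by measurable
    show "(\<lambda>x. indicator {- real n..real n} x * w x) \<in> borel_measurable lborel" for n by measurable
    show "integrable lborel w" by (rule wint)
    show "AE x in lborel. (\<lambda>n. indicator {- real n..real n} x * w x) \<longlonglongrightarrow> w x"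
    proof (rule AE_I2, rule tendsto_eventually)
      fix x :: real
      obtain n :: nat where "\<bar>x\<bar> \<le> real n" using real_arch_simple by blast
      then show "\<forall>\<^sub>F n in sequentially. indicator {- real n..real n} x * w x = w x"
        unfolding eventually_sequentially by (intro exI[of _ n]) (auto simp: indicator_def)
    qed
    show "AE x in lborel. norm (indicator {- real n..real n} x * w x) \<le> w x" for n
      using wpos by (auto simp: indicator_def less_imp_le)
  qed
  have ev1: "\<forall>\<^sub>F n in sequentially. W - \<gamma> / \<alpha> < (\<integral>x. indicator {- real n..real n} x * w x \<partial>lborel)"
    by (rule order_tendstoD(1)[OF lim]) (use \<gamma> \<alpha> in simp)
  have ev2: "\<forall>\<^sub>F n in sequentially. 4 / \<gamma> < real n"
    by (rule filterlim_real_sequentially[THEN filterlim_at_top_dense[THEN iffD1], rule_format]) 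
  obtain n :: nat where n1: "W - \<gamma> / \<alpha> < (\<integral>x. indicator {- real n..real n} x * w x \<partial>lborel)"
    and n2: "4 / \<gamma> < real n"
    using eventually_conj[OF ev1 ev2] unfolding eventually_sequentially by blast
  define L where "L = real n"
  have L0: "0 < L" using n2 \<gamma> unfolding L_def by (smt (verit) divide_pos_pos)
  define WL where "WL = (\<integral>x. indicator {-L..L} x * w x \<partial>lborel)"
  have WL: "W - \<gamma> / \<alpha> < WL" using n1 unfolding WL_def L_def by simp
  have L2: "2 / L < \<gamma> / 2"
  proof -
    have "4 < \<gamma> * L" using n2 \<gamma> unfolding L_def by (simp add: field_simps)
    then show ?thesis using L0 by (simp add: field_simps)
  qed
  define C where "C = (\<integral>x. (bump L x)^2 \<partial>lborel)"
  define v where "v = (\<lambda>x. sqrt (m / C) * bump L x)"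
  note BE = bump_energy[OF uNE u2 mom m L0 C_def v_def]
  note BE2 = bump_energy(2)[OF uNE u2 mom m L0 C_def v_def, where \<alpha>=\<alpha> and \<beta>=\<beta>]
  have Cpos: "0 < C" using BE(3) L0 by linarith
  have mC: "0 < m / C" using m Cpos by simp
  define I1 where "I1 = (\<integral>x. (wderiv v x)^2 \<partial>lborel)"
  define I2 where "I2 = (\<integral>x. (v x)^4 \<partial>lborel)"
  define I3 where "I3 = (\<integral>x. w x * (v x)^2 \<partial>lborel)"
  have en: "energy \<alpha> \<beta> uq v = energy \<alpha> \<beta> uq (\<lambda>_. 0) + I1 / 2 + \<beta>/4 * I2 - \<alpha>/2 * I3"
    using BE2 unfolding I1_def I2_def I3_def w_def by simp
  have b1: "I1 / 2 \<le> (m / C) * (2 / L)" using BE(5) unfolding I1_def by (simp add: mult.commute)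
  have b2: "\<beta>/4 * I2 \<le> (m / C) * (\<beta> * m / 4)"
  proof -
    have "\<beta>/4 * I2 \<le> \<beta>/4 * (m^2 / C)" using BE(6) \<beta> unfolding I2_def by (intro mult_left_mono) auto
    then show ?thesis by (simp add: power2_eq_square field_simps)
  qed
  have b3: "(m / C) * WL \<le> I3"
  proof -
    have "(\<integral>x. (m / C) * (indicator {-L..L} x * w x) \<partial>lborel) \<le> I3"
      unfolding I3_def
    proof (rule integral_mono)
      show "integrable lborel (\<lambda>x. (m / C) * (indicator {-L..L} x * w x))"
        using integrable_real_mult_indicator[OF _ wint, of "{-L..L}"] by (simp add: mult.commute)
      show "integrable lborel (\<lambda>x. w x * (v x)^2)" using BE(9) unfolding w_def .
      show "(m / C) * (indicator {-L..L} x * w x) \<le> w x * (v x)^2" for x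
        using BE(8)[of x] wpos[of x] mult_left_mono[of "(m / C) * indicator {-L..L} x" "(v x)^2" "w x"]
        by (simp add: algebra_simps)
    qed
    then show ?thesis unfolding WL_def by simp
  qed
  have b3': "\<alpha>/2 * ((m / C) * WL) \<le> \<alpha>/2 * I3" using b3 \<alpha> by (intro mult_left_mono) auto
  have "energy \<alpha> \<beta> uq v \<le> energy \<alpha> \<beta> uq (\<lambda>_. 0) + (m / C) * (2 / L + \<beta> * m / 4 - \<alpha> * WL / 2)"
    using en b1 b2 b3' by (simp add: algebra_simps)
  moreover have "2 / L + \<beta> * m / 4 - \<alpha> * WL / 2 < 0"
  proof -
    have "\<alpha> * (W - \<gamma> / \<alpha>) < \<alpha> * WL" using WL \<alpha> by simp
    then have h: "\<alpha> * W - \<gamma> < \<alpha> * WL" using \<alpha> by (simp add: algebra_simps)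
    have X: "Z + B/4 - D/2 < 0" if "A - (A/2 - B/4) < D" "Z < (A/2 - B/4)/2" for A B D Z :: real
      using that by (simp add: field_simps)
    show ?thesis by (rule X[OF h[unfolded \<gamma>_def] L2[unfolded \<gamma>_def]])
  qed
  ultimately have "energy \<alpha> \<beta> uq v < energy \<alpha> \<beta> uq (\<lambda>_. 0)"
    using mC by (smt (verit) mult_pos_neg)
  then have "ereal (energy \<alpha> \<beta> uq v) < Emin \<alpha> \<beta> q 0" unfolding E0[symmetric] by simp
  moreover have "Emin \<alpha> \<beta> q m \<le> ereal (energy \<alpha> \<beta> uq v)" using Emin_le[OF BE(1)] by simp
  ultimately show ?thesis by (rule le_less_trans[rotated])
qed

theorem lemma4p3:
  fixes \<alpha> \<beta> q m :: real
  assumes "\<alpha> > 0" and "\<beta> \<ge> 0" and "0 < q" and "q < pi / 2" and "m \<ge> 0"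
  shows "Emin \<alpha> \<beta> q m \<le> Emin \<alpha> \<beta> q 0 \<and> Emin \<alpha> \<beta> q 0 < ereal (sqrt 2 * q) \<and>
    (\<forall>uq. is_dark_soliton \<alpha> \<beta> q uq \<longrightarrow> m > 0 \<longrightarrow>
       m * \<beta> < 2 * \<alpha> * (\<integral>x. 1 - (cmod (uq x))^2 \<partial>lborel) \<longrightarrow>
       Emin \<alpha> \<beta> q m < Emin \<alpha> \<beta> q 0)"
  using part1[OF assms(1,2,5)] part2[OF assms(3,4)] part3[OF assms(1,2)] by blast


end
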